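(* Assume (A1) and (A2), and let $\alpha>0$ be arbitrary. Along every trajectory of the algorithm described in the context, for all $k\ge0$, $$V_\xi(k+1)-V_\xi(k)\le-\tfrac12\|\bm e_\xi(k)\|^2+\beta_{\xi x}\|\bm e_x(k)\|^2+\alpha^2\max_ib_{2i}\big(\|\bm e_\psi(k)\|^2+\|\bm e_\xi(k)\|^2+N\|\bm e_{\bar x}(k)\|^2\big).$$
   Context: Game. $N$ coalitions; coalition $i$ has agents $i1,\dots,in_i$; $\mathcal V_i=\{i1,\dots,in_i\}$, $\mathcal V=\bigcup_i\mathcal V_i$, $n_{\mathrm{sum}}=\sum_in_i$; agents ordered lexicographically. Agent $ij$ has state $x_{ij}\in\mathbb{R}$; $\bm x_i=(x_{i1},\dots,x_{in_i})^T$, $\bm x=(\bm x_1^T,\dots,\bm x_N^T)^T$. Costs $f_{ij}:\mathbb{R}^{n_{\mathrm{sum}}}\to\mathbb{R}$, $f_i=\sum_jf_{ij}$. For $\bm y\in\mathbb{R}^N$, $g_i(\bm y)=f_i((y_1\mathbf 1_{n_1}^T,\dots,y_N\mathbf 1_{n_N}^T)^T)$; $\bm y^*$ is the Nash equilibrium of the game $\min_{y_i}g_i(\bm y)$, $i=1,\dots,N$, and $\bm x^*=(y_1^*\mathbf 1_{n_1}^T,\dots,y_N^*\mathbf 1_{n_N}^T)^T$ (so $\mathbf 1_{n_i}^T\frac{\partial f_i}{\partial\bm x_i}(\bm x^* )=0$ for all $i$). Graph. Directed graph $\mathcal G=(\mathcal V,\mathcal E)$, $(pq,ij)\in\mathcal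 E$ meaning $ij$ receives from $pq$. $a_{ij}^{pq}=1$ if $(pq,ij)\in\mathcal E$, $pq\ne ij$, else $0$; $d_{ij}=\sum_{pq}a_{ij}^{pq}$; Laplacian $L$ with diagonal $d_{ij}$, off-diagonal $-a_{ij}^{pq}$. $\mathcal G_i$: subgraph induced on $\mathcal V_i$. $\mathcal N_{ij}^{\mathrm{in}}$, $\mathcal N_{ij}^{i\text{-in}}$, $\mathcal N_{ij}^{i\text{-out}}$: in-neighbors in $\mathcal G$, in-neighbors and out-neighbors in $\mathcal G_i$. Assumptions. (A1) $\mathcal G$ and every $\mathcal G_i$ are strongly connected. (A2) each $f_{ij}$ is convex, $C^2$, with $\nabla f_{ij}$ Lipschitz of constant $l_{ij}$. Algorithm. Weights $r_{ij}^{im}>0$ for $im\in\mathcal N_{ij}^{i\text{-in}}\cup\{ij\}$ summing to 1, $c_{im}^{ij}>0$ for $im\in\mathcal N_{ij}^{i\text{-out}}\cup\{ij\}$ summing to 1, other within-coalition weights $0$; $R_i=[r_{ij}^{im}]$, $C_i=[c_{ij}^{im}]$ ($j$ row, $m$ column). Step size $\alpha>0$. Initialization: $x_{ij}(0),\bm\xi_{ij}(0)\in\mathbb{R}^{n_{\mathrm{sum}}}$ arbitrary, $\psi_{ij}^{il}(0)=\frac{\partial f_{ij}}{\partial x_{il}}(\bm\xi_{ij}(0))$. For $k\ge0$: $x_{ij}(k+1)=\sum_mr_{ij}^{im}x_{im}(k)-\frac{\alpha}{n_i}\sum_{m=1}^{n_i}\psi_{ij}^{im}(k)$; $\xi_{ij}^{pq}(k+1)=\xi_{ij}^{pq}(k)-\frac1{d_{ij}+a_{ij}^{pq}}\big(\sum_{lm\in\mathcal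 N_{ij}^{\mathrm{in}}}(\xi_{ij}^{pq}(k)-\xi_{lm}^{pq}(k))+a_{ij}^{pq}(\xi_{ij}^{pq}(k)-x_{pq}(k))\big)$ for all $pq\in\mathcal V$; $\psi_{ij}^{il}(k+1)=\sum_mc_{ij}^{im}\psi_{im}^{il}(k)+\frac{\partial f_{ij}}{\partial x_{il}}(\bm\xi_{ij}(k+1))-\frac{\partial f_{ij}}{\partial x_{il}}(\bm\xi_{ij}(k))$. Auxiliary quantities. $u_i$: $u_i^TR_i=u_i^T$, $u_i^T\mathbf 1=n_i$; $v_i$: $C_iv_i=v_i$, $\mathbf 1^Tv_i=n_i$. $\Gamma$, $A_d$: diagonal $n_{\mathrm{sum}}^2\times n_{\mathrm{sum}}^2$ matrices with entries $\frac1{d_{ij}+a_{ij}^{pq}}$, $a_{ij}^{pq}$ indexed by $(ij,pq)$, $ij$ outer, $pq$ inner. $H=\Gamma(L\otimes I_{n_{\mathrm{sum}}}+A_d)$, $\mathcal M=I-H$; $W_{\mathcal M}$: symmetric positive definite solution of $\mathcal M^TW\mathcal M-W=-I$. Spectral matrix norms. $\beta_{\xi x}=n_{\mathrm{sum}}(4\|\mathcal M^TW_{\mathcal M}\|^2+2\|W_{\mathcal M}\|)\|H\|^2$, $b_{0i}=n_i+(\frac1{n_i}+\max_kn_k)\|v_i\|^2\sum_{j=1}^{n_i}l_{ij}^2$, $b_{2i}=n_{\mathrm{sum}}(4\|\mathcal M^TW_{\mathcal M}\|^2+2\|W_{\mathcal M}\|)\|\frac{\mathbf 1_{n_i}u_i^T}{n_i^2}\|^2b_{0i}$.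 Errors and Lyapunov function. $\bm\psi_i=(\psi_{i1}^{i1},\dots,\psi_{i1}^{in_i},\psi_{i2}^{i1},\dots,\psi_{in_i}^{in_i})^T$, $\bar{\bm\psi}_i=\frac1{n_i}(\mathbf 1^T\otimes I_{n_i})\bm\psi_i$, $\bm e_{\psi_i}=\bm\psi_i-v_i\otimes\bar{\bm\psi}_i$. $\bar x_i=u_i^T\bm x_i/n_i$, $e_{\bar x_i}=\bar x_i-y_i^*$, $\bm e_{x_i}=\bm x_i-\mathbf 1_{n_i}\bar x_i$, $\bar{\bm X}=(\bar x_1\mathbf 1_{n_1}^T,\dots,\bar x_N\mathbf 1_{n_N}^T)^T$. $\bm\xi_i=(\bm\xi_{i1}^T,\dots,\bm\xi_{in_i}^T)^T$, $\bm\xi=(\bm\xi_1^T,\dots,\bm\xi_N^T)^T$, $\bm e_{\xi_i}=\bm\xi_i-\mathbf 1_{n_i}\otimes\bar{\bm X}$. $\bm e_\psi,\bm e_{\bar x},\bm e_x,\bm e_\xi$: stacks over $i$. $V_\xi(k)=\bm e_\xi(k)^TW_{\mathcal M}\bm e_\xi(k)$. *)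

theory Defs
  imports "HOL-Analysis.Analysis"
begin

(* Agents are the elements of a finite type 'v; coalitions the elements of a finite
   type 'c; coal v is the coalition of agent v.  Vectors in R^{n_sum} are real^'v,
   matrices acting on R^{n_sum^2} are real^('v*'v)^('v*'v), index (ij,pq), ij outer. *)

(* a_v^w = 1 iff (w,v) in E (v receives from w) and w <> v *)
definition adj :: "('v \<times> 'v) set \<Rightarrow> 'v \<Rightarrow> 'v \<Rightarrow> real" where
  "adj E v w = (if (w, v) \<in> E \<and> w \<noteq> v then 1 else 0)"

definition deg :: "('v::finite \<times> 'v) set \<Rightarrow> 'v \<Rightarrow> real" where
  "deg E v = (\<Sum>w\<in>UNIV. adj E v w)"

definition lap :: "('v::finite \<times> 'v) set \<Rightarrow> real^'v^'v" where
  "lap E = (\<chi> a b. if a = b then deg E a else - adj E a b)"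

definition Nin :: "('v \<times> 'v) set \<Rightarrow> 'v \<Rightarrow> 'v set" where
  "Nin E v = {w. (w, v) \<in> E \<and> w \<noteq> v}"

definition memb :: "('v \<Rightarrow> 'c) \<Rightarrow> 'c \<Rightarrow> 'v set" where
  "memb coal i = {v. coal v = i}"

definition ncard :: "('v \<Rightarrow> 'c) \<Rightarrow> 'c \<Rightarrow> nat" where
  "ncard coal i = card (memb coal i)"

definition Nin_c :: "('v \<times> 'v) set \<Rightarrow> ('v \<Rightarrow> 'c) \<Rightarrow> 'v \<Rightarrow> 'v set" where
  "Nin_c E coal v = {w. coal w = coal v \<and> (w, v) \<in> E \<and> w \<noteq> v}"

definition Nout_c :: "('v \<times> 'v) set \<Rightarrow> ('v \<Rightarrow> 'c) \<Rightarrow> 'v \<Rightarrow> 'v set" where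
  "Nout_c E coal v = {w. coal w = coal v \<and> (v, w) \<in> E \<and> w \<noteq> v}"

definition strongly_connected_on :: "'v set \<Rightarrow> ('v \<times> 'v) set \<Rightarrow> bool" where
  "strongly_connected_on S E \<longleftrightarrow> (\<forall>a\<in>S. \<forall>b\<in>S. (a, b) \<in> (E \<inter> S \<times> S)\<^sup>*)"

definition kron_I :: "real^'v^'v \<Rightarrow> real^('v \<times> 'w::finite)^('v \<times> 'w)" where
  "kron_I A = (\<chi> r s. A $ fst r $ fst s * (if snd r = snd s then 1 else 0))"

definition Gam :: "('v::finite \<times> 'v) set \<Rightarrow> real^('v \<times> 'v)^('v \<times> 'v)" where
  "Gam E = (\<chi> r s. if r = s then 1 / (deg E (fst r) + adj E (fst r) (snd r)) else 0)"

definition Ad :: "('v::finite \<times> 'v) set \<Rightarrow> real^('v \<times> 'v)^('v \<times> 'v)" where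
  "Ad E = (\<chi> r s. if r = s then adj E (fst r) (snd r) else 0)"

definition Hmat :: "('v::finite \<times> 'v) set \<Rightarrow> real^('v \<times> 'v)^('v \<times> 'v)" where
  "Hmat E = Gam E ** (kron_I (lap E) + Ad E)"

definition Mmat :: "('v::finite \<times> 'v) set \<Rightarrow> real^('v \<times> 'v)^('v \<times> 'v)" where
  "Mmat E = mat 1 - Hmat E"

definition snorm :: "real^'n^'m \<Rightarrow> real" where
  "snorm A = onorm (\<lambda>x. A *v x)"

definition C2 :: "('a::euclidean_space \<Rightarrow> real) \<Rightarrow> bool" where
  "C2 g \<longleftrightarrow> (\<exists>(g' :: 'a \<Rightarrow> ('a \<Rightarrow>\<^sub>L real)) (g'' :: 'a \<Rightarrow> ('a \<Rightarrow>\<^sub>L ('a \<Rightarrow>\<^sub>L real))).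
      (\<forall>x. (g has_derivative blinfun_apply (g' x)) (at x)) \<and>
      (\<forall>x. (g' has_derivative blinfun_apply (g'' x)) (at x)) \<and>
      continuous_on UNIV g'')"

definition pd :: "(real^'v \<Rightarrow> real) \<Rightarrow> real^'v \<Rightarrow> 'v \<Rightarrow> real" where
  "pd g x w = frechet_derivative g (at x) (axis w 1)"

definition grad :: "(real^'v \<Rightarrow> real) \<Rightarrow> real^'v \<Rightarrow> real^'v" where
  "grad g x = (\<chi> w. pd g x w)"

definition gcost :: "('v::finite \<Rightarrow> 'c) \<Rightarrow> ('v \<Rightarrow> real^'v \<Rightarrow> real) \<Rightarrow> 'c \<Rightarrow> real^'c \<Rightarrow> real" where
  "gcost coal f i y = (\<Sum>v\<in>memb coal i. f v (\<chi> w. y $ coal w))"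

definition is_NE :: "('v::finite \<Rightarrow> 'c::finite) \<Rightarrow> ('v \<Rightarrow> real^'v \<Rightarrow> real) \<Rightarrow> real^'c \<Rightarrow> bool" where
  "is_NE coal f y \<longleftrightarrow>
     (\<forall>i t. gcost coal f i y \<le> gcost coal f i (\<chi> c. if c = i then t else y $ c))"

definition xbar :: "('v::finite \<Rightarrow> 'c) \<Rightarrow> ('v \<Rightarrow> real) \<Rightarrow> real^'v \<Rightarrow> 'c \<Rightarrow> real" where
  "xbar coal u x i = (\<Sum>j\<in>memb coal i. u j * x $ j) / real (ncard coal i)"

definition e_xbar :: "('v::finite \<Rightarrow> 'c::finite) \<Rightarrow> ('v \<Rightarrow> real) \<Rightarrow> real^'c \<Rightarrow> real^'v \<Rightarrow> real^'c" where
  "e_xbar coal u ystar x = (\<chi> i. xbar coal u x i - ystar $ i)"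

definition e_x :: "('v::finite \<Rightarrow> 'c) \<Rightarrow> ('v \<Rightarrow> real) \<Rightarrow> real^'v \<Rightarrow> real^'v" where
  "e_x coal u x = (\<chi> v. x $ v - xbar coal u x (coal v))"

definition e_xi :: "('v::finite \<Rightarrow> 'c) \<Rightarrow> ('v \<Rightarrow> real) \<Rightarrow> real^'v \<Rightarrow> ('v \<Rightarrow> real^'v) \<Rightarrow> real^('v \<times> 'v)" where
  "e_xi coal u x xi = (\<chi> r. xi (fst r) $ snd r - xbar coal u x (coal (snd r)))"

definition psibar :: "('v::finite \<Rightarrow> 'c) \<Rightarrow> ('v \<Rightarrow> 'v \<Rightarrow> real) \<Rightarrow> 'c \<Rightarrow> 'v \<Rightarrow> real" where
  "psibar coal psi i l = (\<Sum>j\<in>memb coal i. psi j l) / real (ncard coal i)"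

(* e_psi, padded with zeros at the index pairs (j,l) lying in different coalitions *)
definition e_psi :: "('v::finite \<Rightarrow> 'c) \<Rightarrow> ('v \<Rightarrow> real) \<Rightarrow> ('v \<Rightarrow> 'v \<Rightarrow> real) \<Rightarrow> real^('v \<times> 'v)" where
  "e_psi coal vv psi = (\<chi> r. if coal (fst r) = coal (snd r)
       then psi (fst r) (snd r) - vv (fst r) * psibar coal psi (coal (fst r)) (snd r) else 0)"

definition Vxi :: "real^('v::finite \<times> 'v)^('v \<times> 'v) \<Rightarrow> real^('v \<times> 'v) \<Rightarrow> real" where
  "Vxi W e = e \<bullet> (W *v e)"

(* the n_i x n_i matrix 1 u_i^T / n_i^2, embedded as a block (zero-padded) in R^{n_sum x n_sum};
   zero padding does not change the spectral norm *)
definition Pmat :: "('v::finite \<Rightarrow> 'c) \<Rightarrow> ('v \<Rightarrow> real) \<Rightarrow> 'c \<Rightarrow> real^'v^'v" where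
  "Pmat coal u i = (\<chi> a b. if coal a = i \<and> coal b = i then u b / (real (ncard coal i))\<^sup>2 else 0)"

definition cW :: "('v::finite \<times> 'v) set \<Rightarrow> real^('v \<times> 'v)^('v \<times> 'v) \<Rightarrow> real" where
  "cW E W = 4 * (snorm (transpose (Mmat E) ** W))\<^sup>2 + 2 * snorm W"

definition beta_xix :: "('v::finite \<times> 'v) set \<Rightarrow> real^('v \<times> 'v)^('v \<times> 'v) \<Rightarrow> real" where
  "beta_xix E W = real CARD('v) * cW E W * (snorm (Hmat E))\<^sup>2"

definition b0 :: "('v::finite \<Rightarrow> 'c::finite) \<Rightarrow> ('v \<Rightarrow> real) \<Rightarrow> ('v \<Rightarrow> real) \<Rightarrow> 'c \<Rightarrow> real" where
  "b0 coal vv l i = real (ncard coal i)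
     + (1 / real (ncard coal i) + real (Max (range (ncard coal))))
       * (\<Sum>j\<in>memb coal i. (vv j)\<^sup>2) * (\<Sum>j\<in>memb coal i. (l j)\<^sup>2)"

definition b2 :: "('v::finite \<times> 'v) set \<Rightarrow> real^('v \<times> 'v)^('v \<times> 'v) \<Rightarrow> ('v \<Rightarrow> 'c::finite)
    \<Rightarrow> ('v \<Rightarrow> real) \<Rightarrow> ('v \<Rightarrow> real) \<Rightarrow> ('v \<Rightarrow> real) \<Rightarrow> 'c \<Rightarrow> real" where
  "b2 E W coal u vv l i = real CARD('v) * cW E W * (snorm (Pmat coal u i))\<^sup>2 * b0 coal vv l i"

end

theory Submission
  imports Defs
begin



lemma snorm_bound: "norm (A *v x) \<le> snorm A * norm (x::real^'n)"
  for A :: "real^'n^'m"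
  unfolding snorm_def by (rule onorm[OF matrix_vector_mul_bounded_linear])

lemma snorm_nonneg: "0 \<le> snorm (A::real^'n^'m)"
  unfolding snorm_def by (rule onorm_pos_le[OF matrix_vector_mul_bounded_linear])

lemma snorm_lower: "norm (A *v x) / norm (x::real^'n) \<le> snorm A"
  for A :: "real^'n^'m"
  unfolding snorm_def by (rule le_onorm[OF matrix_vector_mul_bounded_linear])

lemma lyap_step:
  fixes M W :: "real^'n^'n" and e d :: "real^'n"
  assumes W_sym: "transpose W = W" and W_lyap: "transpose M ** W ** M - W = - mat 1"
  shows "(M *v e + d) \<bullet> (W *v (M *v e + d)) - e \<bullet> (W *v e)
     \<le> -(1/2) * (norm e)\<^sup>2 + (2 * (snorm (transpose M ** W))\<^sup>2 + snorm W) * (norm d)\<^sup>2"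
proof -
  have symm: "a \<bullet> (W *v b) = b \<bullet> (W *v a)" for a b
    by (metis W_sym dot_lmul_matrix inner_commute transpose_matrix_vector)
  have mm: "(M *v e) \<bullet> (W *v (M *v e)) = e \<bullet> (W *v e) - e \<bullet> e"
  proof -
    have "(M *v e) \<bullet> (W *v (M *v e)) = e \<bullet> ((transpose M ** W ** M) *v e)"
      by (metis dot_lmul_matrix matrix_vector_mul_assoc transpose_matrix_vector vector_transpose_matrix)
    also have "transpose M ** W ** M = W - mat 1" using W_lyap by (simp add: algebra_simps)
    also have "e \<bullet> ((W - mat 1) *v e) = e \<bullet> (W *v e) - e \<bullet> e"
      by (simp add: matrix_vector_mult_diff_rdistrib inner_diff_right)
    finally show ?thesis .
  qed
  have cross: "(M *v e) \<bullet> (W *v d) = e \<bullet> ((transpose M ** W) *v d)"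
    by (metis dot_lmul_matrix matrix_vector_mul_assoc vector_transpose_matrix)
  have expand: "(M *v e + d) \<bullet> (W *v (M *v e + d)) =
      (M *v e) \<bullet> (W *v (M *v e)) + 2 * ((M *v e) \<bullet> (W *v d)) + d \<bullet> (W *v d)"
    using symm[of d "M *v e"] by (simp add: matrix_vector_right_distrib inner_add_left inner_add_right)
  define s where "s = snorm (transpose M ** W)"
  have c1: "e \<bullet> ((transpose M ** W) *v d) \<le> norm e * (s * norm d)"
    using Cauchy_Schwarz_ineq2[of e "(transpose M ** W) *v d"] snorm_bound[of "transpose M ** W" d]
    unfolding s_def
    by (smt (verit) mult_left_mono norm_ge_zero real_inner_class.Cauchy_Schwarz_ineq2)
  have c2: "d \<bullet> (W *v d) \<le> snorm W * (norm d)\<^sup>2"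
  proof -
    have "d \<bullet> (W *v d) \<le> norm d * norm (W *v d)" by (rule Cauchy_Schwarz_ineq2[THEN abs_le_D1])
    also have "\<dots> \<le> norm d * (snorm W * norm d)" by (simp add: mult_left_mono snorm_bound)
    finally show ?thesis by (simp add: power2_eq_square algebra_simps)
  qed
  have c3: "2 * (norm e * (s * norm d)) \<le> (1/2) * (norm e)\<^sup>2 + 2 * s\<^sup>2 * (norm d)\<^sup>2"
    using sum_squares_ge_zero[of "norm e / 2 - s * norm d" 0]
    by (simp add: power2_eq_square algebra_simps)
  have "e \<bullet> e = (norm e)\<^sup>2" by (simp add: power2_norm_eq_inner)
  then show ?thesis using mm cross expand c1 c2 c3 unfolding s_def
    by (simp add: algebra_simps) 
qed



lemma cs_sum:
  fixes f g :: "'a \<Rightarrow> real"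
  shows "(\<Sum>i\<in>A. f i * g i)\<^sup>2 \<le> (\<Sum>i\<in>A. (f i)\<^sup>2) * (\<Sum>i\<in>A. (g i)\<^sup>2)"
proof -
  have h1: "\<bar>\<Sum>i\<in>A. f i * g i\<bar> \<le> (\<Sum>i\<in>A. \<bar>f i\<bar> * \<bar>g i\<bar>)"
    using sum_abs[of "\<lambda>i. f i * g i" A] by (simp add: abs_mult)
  have h2: "(\<Sum>i\<in>A. \<bar>f i\<bar> * \<bar>g i\<bar>) \<le> L2_set f A * L2_set g A" by (rule L2_set_mult_ineq)
  have h3: "0 \<le> L2_set f A * L2_set g A" by (simp add: L2_set_nonneg)
  have "\<bar>\<Sum>i\<in>A. f i * g i\<bar> \<le> \<bar>L2_set f A * L2_set g A\<bar>" using h1 h2 h3 by linarith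
  then have "(\<Sum>i\<in>A. f i * g i)\<^sup>2 \<le> (L2_set f A * L2_set g A)\<^sup>2"
    by (simp only: abs_le_square_iff)
  also have "\<dots> = (L2_set f A)\<^sup>2 * (L2_set g A)\<^sup>2" by (simp only: power_mult_distrib)
  also have "(L2_set f A)\<^sup>2 = (\<Sum>i\<in>A. (f i)\<^sup>2)" unfolding L2_set_def by (simp add: sum_nonneg)
  also have "(L2_set g A)\<^sup>2 = (\<Sum>i\<in>A. (g i)\<^sup>2)" unfolding L2_set_def by (simp add: sum_nonneg)
  finally show ?thesis .
qed

lemma sum_sq_le_card: "(\<Sum>i\<in>A. f i)\<^sup>2 \<le> real (card A) * (\<Sum>i\<in>A. (f i)\<^sup>2)"
  for f :: "'a \<Rightarrow> real"
  using cs_sum[of "\<lambda>_. 1" f A] by simp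

lemma diag_mult: "(\<chi> r s. if r = s then g r else 0) *v y = (\<chi> r. g r * y $ r)"
  for y :: "real^'n"
proof -
  have "(\<Sum>j\<in>UNIV. (if i = j then g i else 0) * y $ j) = (\<Sum>j\<in>UNIV. if i = j then g i * y $ j else 0)" for i
    by (rule sum.cong) auto
  then show ?thesis by (simp add: matrix_vector_mult_def vec_eq_iff)
qed

lemma sum_UNIV_pair: "(\<Sum>r\<in>(UNIV::('a::finite \<times> 'b::finite) set). h r) = (\<Sum>a\<in>UNIV. \<Sum>b\<in>UNIV. h (a, b))"
  by (simp add: sum.cartesian_product)

lemma kron_apply: "(kron_I L *v e) $ (v, p) = (\<Sum>w\<in>UNIV. L $ v $ w * e $ (w, p))"
  for e :: "real^('v::finite \<times> 'w::finite)"
proof -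
  have "(\<Sum>b\<in>UNIV. L $ v $ a * (if p = b then 1 else 0) * e $ (a, b)) = L $ v $ a * e $ (a, p)" for a
  proof -
    have "(\<Sum>b\<in>UNIV. L $ v $ a * (if p = b then 1 else 0) * e $ (a, b)) = (\<Sum>b\<in>UNIV. if p = b then L $ v $ a * e $ (a, b) else 0)"
      by (rule sum.cong) auto
    then show ?thesis by simp
  qed
  then show ?thesis unfolding kron_I_def matrix_vector_mult_def
    by (simp add: sum_UNIV_pair)
qed

lemma adj_self[simp]: "adj E v v = 0" by (simp add: adj_def)
lemma adj_01: "adj E v w = 0 \<or> adj E v w = 1" by (simp add: adj_def)
lemma adj_nonneg: "0 \<le> adj E v w" by (simp add: adj_def)
lemma adj_le1: "adj E v w \<le> 1" by (simp add: adj_def)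
lemma adj_le_deg: "adj E v w \<le> deg E v"
  unfolding deg_def by (rule member_le_sum) (auto simp: adj_nonneg)
lemma deg_nonneg: "0 \<le> deg E v" unfolding deg_def by (simp add: sum_nonneg adj_nonneg)

lemma lap_apply_sum: "(\<Sum>w\<in>UNIV. lap E $ v $ w * e w) = deg E v * e v - (\<Sum>w\<in>UNIV. adj E v w * e w)"
proof -
  have "lap E $ v $ w = (if v = w then deg E v else 0) - adj E v w" for w
    by (auto simp: lap_def)
  then have "(\<Sum>w\<in>UNIV. lap E $ v $ w * e w) = (\<Sum>w\<in>UNIV. (if v = w then deg E v * e w else 0) - adj E v w * e w)"
    by (intro sum.cong) (auto simp: lap_def)
  then show ?thesis
    by (simp add: sum_subtractf)
qed

lemma Mmat_apply:
  fixes e :: "real^('v::finite \<times> 'v)"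
  shows "(Mmat E *v e) $ (v, p) = e $ (v, p) -
     (deg E v * e $ (v, p) - (\<Sum>w\<in>UNIV. adj E v w * e $ (w, p)) + adj E v p * e $ (v, p))
       / (deg E v + adj E v p)"
proof -
  have G: "Gam E = (\<chi> r s. if r = s then 1 / (deg E (fst r) + adj E (fst r) (snd r)) else 0)"
    by (simp add: Gam_def)
  have A: "Ad E = (\<chi> r s. if r = s then adj E (fst r) (snd r) else 0)"
    by (simp add: Ad_def)
  have "(Hmat E *v e) $ (v, p) = (deg E v * e $ (v, p) - (\<Sum>w\<in>UNIV. adj E v w * e $ (w, p)) + adj E v p * e $ (v, p))
       / (deg E v + adj E v p)"
    unfolding Hmat_def matrix_vector_mul_assoc[symmetric] matrix_vector_mult_add_rdistrib
    apply (subst G, subst A)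
    by (simp add: diag_mult kron_apply lap_apply_sum)
  then show ?thesis
    by (simp add: Mmat_def matrix_vector_mult_diff_rdistrib)
qed

lemma Nin_sum: "(\<Sum>w\<in>Nin E v. g w) = (\<Sum>w\<in>UNIV. adj E v w * g w)"
  for g :: "'v::finite \<Rightarrow> real"
proof -
  have "(\<Sum>w\<in>UNIV. adj E v w * g w) = (\<Sum>w\<in>UNIV. if w \<in> Nin E v then g w else 0)"
    by (rule sum.cong) (auto simp: adj_def Nin_def)
  also have "\<dots> = (\<Sum>w\<in>Nin E v. g w)"
    using sum.inter_restrict[of UNIV g "Nin E v"] by simp
  finally show ?thesis by simp
qed

lemma sum_group_coal: "(\<Sum>p\<in>UNIV. g p) = (\<Sum>i\<in>UNIV. \<Sum>p\<in>memb coal i. g p)"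
  for g :: "'v::finite \<Rightarrow> real" and coal :: "'v \<Rightarrow> 'c::finite"
  using sum.group[of "UNIV::'v set" "UNIV::'c set" coal g]
  by (simp add: memb_def)



lemma xbar_step:
  fixes coal :: "'v::finite \<Rightarrow> 'c::finite" and x x' :: "real^'v"
  assumes u_left: "\<forall>i m. coal m = i \<longrightarrow> (\<Sum>j\<in>memb coal i. u j * r j m) = u m"
    and upd: "\<forall>v. x' $ v = (\<Sum>m\<in>memb coal (coal v). r v m * x $ m)
        - \<alpha> / real (ncard coal (coal v)) * (\<Sum>m\<in>memb coal (coal v). ps v m)"
  shows "xbar coal u x' i = xbar coal u x i
     - \<alpha> / (real (ncard coal i))\<^sup>2 * (\<Sum>j\<in>memb coal i. u j * (\<Sum>m\<in>memb coal i. ps j m))"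
proof -
  let ?S = "memb coal i" let ?n = "real (ncard coal i)"
  have cj: "j \<in> ?S \<Longrightarrow> coal j = i" for j by (simp add: memb_def)
  have "(\<Sum>j\<in>?S. u j * x' $ j) = (\<Sum>j\<in>?S. u j * (\<Sum>m\<in>?S. r j m * x $ m) - \<alpha> / ?n * (u j * (\<Sum>m\<in>?S. ps j m)))"
    by (rule sum.cong) (auto simp: upd cj algebra_simps)
  also have "\<dots> = (\<Sum>j\<in>?S. \<Sum>m\<in>?S. u j * r j m * x $ m) - \<alpha> / ?n * (\<Sum>j\<in>?S. u j * (\<Sum>m\<in>?S. ps j m))"
    by (simp add: sum_subtractf sum_distrib_left mult.assoc)
  also have "(\<Sum>j\<in>?S. \<Sum>m\<in>?S. u j * r j m * x $ m) = (\<Sum>m\<in>?S. (\<Sum>j\<in>?S. u j * r j m) * x $ m)"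
    by (subst sum.swap) (simp add: sum_distrib_right)
  also have "\<dots> = (\<Sum>m\<in>?S. u m * x $ m)"
    by (rule sum.cong) (auto simp: memb_def u_left[rule_format, OF refl, unfolded memb_def])
  finally have eq: "(\<Sum>j\<in>?S. u j * x' $ j) = (\<Sum>m\<in>?S. u m * x $ m) - \<alpha> / ?n * (\<Sum>j\<in>?S. u j * (\<Sum>m\<in>?S. ps j m))" .
  show ?thesis unfolding xbar_def eq
    by (simp add: power2_eq_square diff_divide_distrib)
qed

lemma exi_step:
  fixes coal :: "'v::finite \<Rightarrow> 'c::finite" and x x' :: "real^'v" and xi xi' :: "'v \<Rightarrow> real^'v"
  assumes upd: "\<forall>v p. xi' v $ p = xi v $ p
        - 1 / (deg E v + adj E v p) *
          ((\<Sum>w\<in>Nin E v. xi v $ p - xi w $ p) + adj E v p * (xi v $ p - x $ p))"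
  shows "e_xi coal u x' xi' = Mmat E *v e_xi coal u x xi +
     (\<chi> r. adj E (fst r) (snd r) / (deg E (fst r) + adj E (fst r) (snd r)) * e_x coal u x $ snd r
         - (xbar coal u x' (coal (snd r)) - xbar coal u x (coal (snd r))))"
proof -
  have "e_xi coal u x' xi' $ (v, p) = (Mmat E *v e_xi coal u x xi) $ (v, p)
     + (adj E v p / (deg E v + adj E v p) * e_x coal u x $ p
         - (xbar coal u x' (coal p) - xbar coal u x (coal p)))" for v p
  proof -
    let ?e = "e_xi coal u x xi" let ?D = "deg E v + adj E v p"
    have ee: "?e $ (w, q) = xi w $ q - xbar coal u x (coal q)" for w q by (simp add: e_xi_def)
    have s1: "(\<Sum>w\<in>Nin E v. xi v $ p - xi w $ p) = deg E v * ?e $ (v, p) - (\<Sum>w\<in>UNIV. adj E v w * ?e $ (w, p))"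
    proof -
      have "(\<Sum>w\<in>Nin E v. xi v $ p - xi w $ p) = (\<Sum>w\<in>UNIV. adj E v w * (?e $ (v, p) - ?e $ (w, p)))"
        by (simp add: Nin_sum ee)
      also have "\<dots> = deg E v * ?e $ (v, p) - (\<Sum>w\<in>UNIV. adj E v w * ?e $ (w, p))"
        by (simp add: right_diff_distrib sum_subtractf deg_def sum_distrib_right)
      finally show ?thesis .
    qed
    have s2: "adj E v p * (xi v $ p - x $ p) = adj E v p * ?e $ (v, p) - adj E v p * e_x coal u x $ p"
      by (simp add: ee e_x_def algebra_simps)
    show ?thesis
      unfolding Mmat_apply
      apply (simp add: e_xi_def upd[rule_format] del: Nin_sum)
      unfolding s1[unfolded ee] s2[unfolded ee]
      by (simp add: algebra_simps add_divide_distrib diff_divide_distrib)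
  qed
  then show ?thesis by (simp add: vec_eq_iff)
qed



lemma norm_sq: "(norm x)\<^sup>2 = (\<Sum>i\<in>UNIV. (x $ i)\<^sup>2)" for x :: "real^'n"
  unfolding power2_norm_eq_inner inner_vec_def by (simp add: power2_eq_square)

lemma gfac_bounds: "0 \<le> adj E v p / (deg E v + adj E v p)" "adj E v p / (deg E v + adj E v p) \<le> 1/2"
proof -
  show "0 \<le> adj E v p / (deg E v + adj E v p)" by (simp add: adj_nonneg deg_nonneg)
  show "adj E v p / (deg E v + adj E v p) \<le> 1/2"
    using adj_01[of E v p] adj_le_deg[of E v p] by auto
qed

lemma gfac_rowsum: "(\<Sum>p\<in>UNIV. adj E v p / (deg E v + adj E v p)) \<le> 1"
proof -
  have "(\<Sum>p\<in>UNIV. adj E v p / (deg E v + adj E v p)) = (\<Sum>p\<in>UNIV. adj E v p / (deg E v + 1))"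
    by (rule sum.cong) (use adj_01[of E v] in auto)
  also have "\<dots> = deg E v / (deg E v + 1)" by (simp add: deg_def sum_divide_distrib)
  also have "\<dots> \<le> 1" using deg_nonneg[of E v] by simp
  finally show ?thesis .
qed

lemma pt_bound:
  fixes g e D T :: real
  assumes "0 \<le> g" "g \<le> 1/2" "D\<^sup>2 \<le> T"
  shows "(g * e - D)\<^sup>2 \<le> e\<^sup>2 / 4 + 2 * g * e\<^sup>2 + g * T / 2 + D\<^sup>2"
proof -
  have a: "g\<^sup>2 * e\<^sup>2 \<le> e\<^sup>2 / 4"
  proof -
    have "g\<^sup>2 \<le> (1/2)\<^sup>2" using assms by (intro power_mono) auto
    then have "g\<^sup>2 * e\<^sup>2 \<le> (1/2)\<^sup>2 * e\<^sup>2" by (rule mult_right_mono) simp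
    then show ?thesis by (simp add: power2_eq_square)
  qed
  have b: "- 2 * e * D \<le> 2 * e\<^sup>2 + D\<^sup>2 / 2"
    using sum_squares_ge_zero[of "2 * e + D" 0] by (simp add: power2_eq_square algebra_simps)
  have b': "g * (- 2 * e * D) \<le> g * (2 * e\<^sup>2 + D\<^sup>2 / 2)" using b assms(1) by (rule mult_left_mono)
  have c: "g * D\<^sup>2 \<le> g * T" using assms by (simp add: mult_left_mono)
  have "(g * e - D)\<^sup>2 = g\<^sup>2 * e\<^sup>2 + g * (- 2 * e * D) + D\<^sup>2" by (simp add: power2_eq_square algebra_simps)
  then show ?thesis using a b' c by (simp add: algebra_simps)
qed

lemma d_bound:
  fixes coal :: "'v::finite \<Rightarrow> 'c::finite" and ex :: "real^'v" and D :: "'c \<Rightarrow> real"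
  shows "(norm ((\<chi> r. adj E (fst r) (snd r) / (deg E (fst r) + adj E (fst r) (snd r)) * ex $ snd r
         - D (coal (snd r))) :: real^('v \<times> 'v)))\<^sup>2
     \<le> 5/4 * real CARD('v) * (norm ex)\<^sup>2 + real CARD('v) * (\<Sum>i\<in>UNIV. (real (ncard coal i) + 1/2) * (D i)\<^sup>2)"
proof -
  define g where "g v p = adj E v p / (deg E v + adj E v p)" for v p
  define T where "T = (\<Sum>i\<in>UNIV. (D i)\<^sup>2)"
  have gb: "0 \<le> g v p" "g v p \<le> 1/2" for v p unfolding g_def by (rule gfac_bounds)+
  have DT: "(D i)\<^sup>2 \<le> T" for i unfolding T_def by (rule member_le_sum) auto
  have "(norm ((\<chi> r. adj E (fst r) (snd r) / (deg E (fst r) + adj E (fst r) (snd r)) * ex $ snd r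
         - D (coal (snd r))) :: real^('v \<times> 'v)))\<^sup>2 = (\<Sum>v\<in>UNIV. \<Sum>p\<in>UNIV. (g v p * ex $ p - D (coal p))\<^sup>2)"
    by (simp add: norm_sq sum_UNIV_pair g_def)
  also have "\<dots> \<le> (\<Sum>v\<in>UNIV. \<Sum>p\<in>UNIV. (ex $ p)\<^sup>2 / 4 + 2 * g v p * (ex $ p)\<^sup>2 + g v p * T / 2 + (D (coal p))\<^sup>2)"
    by (intro sum_mono pt_bound gb DT)
  also have "\<dots> = real CARD('v) / 4 * (\<Sum>p\<in>UNIV. (ex $ p)\<^sup>2) + 2 * (\<Sum>p\<in>UNIV. (ex $ p)\<^sup>2 * (\<Sum>v\<in>UNIV. g v p))
      + T / 2 * (\<Sum>v\<in>UNIV. \<Sum>p\<in>UNIV. g v p) + real CARD('v) * (\<Sum>p\<in>UNIV. (D (coal p))\<^sup>2)"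
  proof -
    have q1: "(\<Sum>v\<in>(UNIV::'v set). \<Sum>p\<in>UNIV. (ex $ p)\<^sup>2 / 4) = real CARD('v) / 4 * (\<Sum>p\<in>UNIV. (ex $ p)\<^sup>2)"
      by (simp add: sum_divide_distrib[symmetric])
    have q2: "(\<Sum>v\<in>UNIV. \<Sum>p\<in>UNIV. 2 * g v p * (ex $ p)\<^sup>2) = 2 * (\<Sum>p\<in>UNIV. (ex $ p)\<^sup>2 * (\<Sum>v\<in>UNIV. g v p))"
      apply (subst sum.swap)
      apply (simp add: sum_distrib_left sum_distrib_right mult.assoc mult.left_commute mult.commute)
      done
    have q3: "(\<Sum>v\<in>UNIV. \<Sum>p\<in>UNIV. g v p * T / 2) = T / 2 * (\<Sum>v\<in>UNIV. \<Sum>p\<in>UNIV. g v p)"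
      by (simp add: sum_distrib_left sum_divide_distrib[symmetric] mult.commute)
    have q4: "(\<Sum>v\<in>(UNIV::'v set). \<Sum>p\<in>UNIV. (D (coal p))\<^sup>2) = real CARD('v) * (\<Sum>p\<in>UNIV. (D (coal p))\<^sup>2)"
      by simp
    show ?thesis unfolding sum.distrib q1 q2 q3 q4 ..
  qed
  also have "\<dots> \<le> real CARD('v) / 4 * (\<Sum>p\<in>UNIV. (ex $ p)\<^sup>2) + 2 * (\<Sum>p\<in>UNIV. (ex $ p)\<^sup>2 * (real CARD('v) / 2))
      + T / 2 * (\<Sum>v\<in>(UNIV::'v set). 1) + real CARD('v) * (\<Sum>p\<in>UNIV. (D (coal p))\<^sup>2)"
  proof -
    have "(\<Sum>v\<in>UNIV. g v p) \<le> (\<Sum>v\<in>(UNIV::'v set). 1/2)" for p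
      by (rule sum_mono) (rule gb)
    then have 1: "(\<Sum>p\<in>UNIV. (ex $ p)\<^sup>2 * (\<Sum>v\<in>UNIV. g v p)) \<le> (\<Sum>p\<in>UNIV. (ex $ p)\<^sup>2 * (real CARD('v) / 2))"
      by (intro sum_mono mult_left_mono) auto
    have 2: "(\<Sum>v\<in>UNIV. \<Sum>p\<in>UNIV. g v p) \<le> (\<Sum>v\<in>(UNIV::'v set). 1)"
      by (rule sum_mono) (simp add: g_def gfac_rowsum)
    have "0 \<le> T" unfolding T_def by (simp add: sum_nonneg)
    have 3: "T / 2 * (\<Sum>v\<in>UNIV. \<Sum>p\<in>UNIV. g v p) \<le> T / 2 * (\<Sum>v\<in>(UNIV::'v set). 1)"
      using 2 \<open>0 \<le> T\<close> by (intro mult_left_mono) auto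
    show ?thesis using 1 3 by linarith
  qed
  also have "(\<Sum>p\<in>UNIV. (D (coal p))\<^sup>2) = (\<Sum>i\<in>UNIV. real (ncard coal i) * (D i)\<^sup>2)"
    by (subst sum_group_coal[of _ coal]) (simp add: memb_def ncard_def)
  finally have fin: "(norm ((\<chi> r. adj E (fst r) (snd r) / (deg E (fst r) + adj E (fst r) (snd r)) * ex $ snd r
         - D (coal (snd r))) :: real^('v \<times> 'v)))\<^sup>2 \<le> real CARD('v) / 4 * (\<Sum>p\<in>UNIV. (ex $ p)\<^sup>2) + 2 * (\<Sum>p\<in>UNIV. (ex $ p)\<^sup>2 * (real CARD('v) / 2))
      + T / 2 * (\<Sum>v\<in>(UNIV::'v set). 1) + real CARD('v) * (\<Sum>i\<in>UNIV. real (ncard coal i) * (D i)\<^sup>2)" .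
  have e1: "(\<Sum>p\<in>UNIV. (ex $ p)\<^sup>2 * (real CARD('v) / 2)) = (real CARD('v) / 2) * (norm ex)\<^sup>2"
    unfolding sum_distrib_right[symmetric] norm_sq by simp
  have e2: "(\<Sum>v\<in>(UNIV::'v set). 1) = real CARD('v)" by simp
  have e3: "(\<Sum>i\<in>UNIV. (real (ncard coal i) + 1/2) * (D i)\<^sup>2) = (\<Sum>i\<in>UNIV. real (ncard coal i) * (D i)\<^sup>2) + T / 2"
    by (simp add: T_def distrib_right sum.distrib sum_divide_distrib)
  have e4: "(\<Sum>p\<in>UNIV. (ex $ p)\<^sup>2) = (norm ex)\<^sup>2" by (simp add: norm_sq)
  show ?thesis using fin unfolding e1 e2 e3 e4 by (simp add: algebra_simps)
qed



lemma ua_bound: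
  fixes u a :: "'a \<Rightarrow> real"
  assumes "finite S" "(\<Sum>j\<in>S. a j) = 0" "(\<Sum>j\<in>S. u j) = real (card S)"
  shows "(\<Sum>j\<in>S. u j * a j)\<^sup>2 \<le> ((\<Sum>j\<in>S. (u j)\<^sup>2) - real (card S)) * (\<Sum>j\<in>S. (a j)\<^sup>2)"
proof -
  have "(\<Sum>j\<in>S. u j * a j) = (\<Sum>j\<in>S. (u j - 1) * a j)"
    using assms(2) by (simp add: left_diff_distrib sum_subtractf)
  moreover have "(\<Sum>j\<in>S. (u j - 1)\<^sup>2) = (\<Sum>j\<in>S. (u j)\<^sup>2) - real (card S)"
  proof -
    have "(\<Sum>j\<in>S. (u j - 1)\<^sup>2) = (\<Sum>j\<in>S. (u j)\<^sup>2 - 2 * u j + 1)"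
      by (rule sum.cong) (auto simp: power2_eq_square algebra_simps)
    also have "\<dots> = (\<Sum>j\<in>S. (u j)\<^sup>2) - 2 * (\<Sum>j\<in>S. u j) + real (card S)"
      by (simp add: sum.distrib sum_subtractf sum_distrib_left)
    finally show ?thesis using assms(3) by simp
  qed
  ultimately show ?thesis using cs_sum[of "\<lambda>j. u j - 1" a S] by simp
qed

lemma key_alg:
  fixes P Q X Y U n :: real
  assumes n1: "1 \<le> n" and Un: "U \<le> n\<^sup>2" and hP: "P\<^sup>2 \<le> (U - n) * X" and hQ: "Q\<^sup>2 \<le> U * Y"
    and X0: "0 \<le> X"
  shows "(2 * n + 1) / (4 * n) * (P + Q)\<^sup>2 \<le> U * X + U * Y"
proof -
  have pos1: "0 < 2 * n - 1" using n1 by simp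
  have pos2: "0 < 4 * n" using n1 by simp
  have sq: "0 \<le> ((2 * n + 1) * P - (2 * n - 1) * Q)\<^sup>2" by simp
  have expand: "(2 * n + 1) * (2 * n - 1) * (P + Q)\<^sup>2 + ((2 * n + 1) * P - (2 * n - 1) * Q)\<^sup>2
      = 4 * n * (2 * n + 1) * P\<^sup>2 + 4 * n * (2 * n - 1) * Q\<^sup>2"
    by (simp add: power2_eq_square algebra_simps)
  have A: "(2 * n + 1) * (2 * n - 1) * (P + Q)\<^sup>2 \<le> 4 * n * (2 * n + 1) * P\<^sup>2 + 4 * n * (2 * n - 1) * Q\<^sup>2"
    using sq expand by linarith
  have B: "(2 * n + 1) * P\<^sup>2 \<le> (2 * n - 1) * (U * X)"
  proof -
    have "(2 * n + 1) * P\<^sup>2 \<le> (2 * n + 1) * ((U - n) * X)" using hP n1 by (intro mult_left_mono) auto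
    also have "\<dots> \<le> (2 * n - 1) * (U * X)"
    proof -
      have "(2 * n + 1) * (U - n) \<le> (2 * n - 1) * U" using Un n1 by (simp add: power2_eq_square algebra_simps)
      then have "(2 * n + 1) * (U - n) * X \<le> (2 * n - 1) * U * X" using X0 by (rule mult_right_mono)
      then show ?thesis by (simp add: mult.assoc)
    qed
    finally show ?thesis .
  qed
  have C: "(2 * n + 1) * (2 * n - 1) * (P + Q)\<^sup>2 \<le> 4 * n * (2 * n - 1) * (U * X + U * Y)"
  proof -
    have "4 * n * ((2 * n + 1) * P\<^sup>2) \<le> 4 * n * ((2 * n - 1) * (U * X))" using B pos2 by simp
    moreover have "4 * n * (2 * n - 1) * Q\<^sup>2 \<le> 4 * n * (2 * n - 1) * (U * Y)"
      using hQ pos1 pos2 by simp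
    ultimately show ?thesis using A by (simp add: algebra_simps)
  qed
  have "(2 * n + 1) / (4 * n) * (P + Q)\<^sup>2 = ((2 * n + 1) * (2 * n - 1) * (P + Q)\<^sup>2) / (4 * n * (2 * n - 1))"
    using pos1 pos2 by (simp add: field_simps)
  also have "\<dots> \<le> (4 * n * (2 * n - 1) * (U * X + U * Y)) / (4 * n * (2 * n - 1))"
    using C pos1 pos2 by (intro divide_right_mono) auto
  also have "\<dots> = U * X + U * Y" using pos1 pos2 by simp
  finally show ?thesis .
qed

lemma perron_nonneg:
  fixes u :: "'a \<Rightarrow> real" and r :: "'a \<Rightarrow> 'a \<Rightarrow> real"
  assumes fin: "finite S"
    and r_nn: "\<forall>j\<in>S. \<forall>m\<in>S. 0 \<le> r j m"
    and r_edge: "\<forall>j\<in>S. \<forall>m\<in>S. (m, j) \<in> E \<longrightarrow> m \<noteq> j \<longrightarrow> 0 < r j m"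
    and rows: "\<forall>j\<in>S. (\<Sum>m\<in>S. r j m) = 1"
    and hfix: "\<forall>m\<in>S. (\<Sum>j\<in>S. u j * r j m) = u m"
    and upos: "0 < (\<Sum>j\<in>S. u j)"
    and sc: "\<forall>a\<in>S. \<forall>b\<in>S. (a, b) \<in> (E \<inter> S \<times> S)\<^sup>*"
  shows "\<forall>m\<in>S. 0 \<le> u m"
proof -
  define w where "w m = max (- u m) 0" for m
  have w0: "0 \<le> w m" for m by (simp add: w_def)
  have le: "w m \<le> (\<Sum>j\<in>S. w j * r j m)" if m: "m \<in> S" for m
  proof -
    have "- u m = (\<Sum>j\<in>S. (- u j) * r j m)" using hfix m by (simp add: sum_negf)
    also have "\<dots> \<le> (\<Sum>j\<in>S. w j * r j m)"
      using r_nn m by (intro sum_mono mult_right_mono) (auto simp: w_def)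
    finally have 1: "- u m \<le> (\<Sum>j\<in>S. w j * r j m)" .
    have 2: "0 \<le> (\<Sum>j\<in>S. w j * r j m)" using r_nn m w0 by (intro sum_nonneg) auto
    show ?thesis using 1 2 by (simp add: w_def)
  qed
  have tot: "(\<Sum>m\<in>S. \<Sum>j\<in>S. w j * r j m) = (\<Sum>m\<in>S. w m)"
  proof -
    have "(\<Sum>m\<in>S. \<Sum>j\<in>S. w j * r j m) = (\<Sum>j\<in>S. w j * (\<Sum>m\<in>S. r j m))"
      by (subst sum.swap) (simp add: sum_distrib_left)
    also have "\<dots> = (\<Sum>j\<in>S. w j)" using rows by simp
    finally show ?thesis .
  qed
  have eq: "w m = (\<Sum>j\<in>S. w j * r j m)" if m: "m \<in> S" for m
  proof -
    have "(\<Sum>m\<in>S. (\<Sum>j\<in>S. w j * r j m) - w m) = 0" using tot by (simp add: sum_subtractf)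
    then have "\<forall>m\<in>S. (\<Sum>j\<in>S. w j * r j m) - w m = 0"
      using sum_nonneg_eq_0_iff[OF fin, of "\<lambda>m. (\<Sum>j\<in>S. w j * r j m) - w m"] le by auto
    then show ?thesis using m by auto
  qed
  have hprop: "w j = 0" if "w m = 0" "m \<in> S" "j \<in> S" "(m, j) \<in> E" for m j
  proof (cases "m = j")
    case True then show ?thesis using that by simp
  next
    case False
    have "(\<Sum>j\<in>S. w j * r j m) = 0" using eq that by simp
    then have "\<forall>j'\<in>S. w j' * r j' m = 0"
      using sum_nonneg_eq_0_iff[OF fin, of "\<lambda>j. w j * r j m"] r_nn w0 that by auto
    then have "w j * r j m = 0" using that by auto
    moreover have "0 < r j m" using r_edge that False by auto
    ultimately show ?thesis by simp
  qed
  obtain m0 where m0: "m0 \<in> S" "0 < u m0"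
  proof (rule ccontr)
    assume "\<not> thesis"
    then have "\<forall>m\<in>S. u m \<le> 0" using that by fastforce
    then have "(\<Sum>j\<in>S. u j) \<le> 0" by (intro sum_nonpos) auto
    then show False using upos by simp
  qed
  have wm0: "w m0 = 0" using m0 by (simp add: w_def)
  have "w b = 0" if "(m0, b) \<in> (E \<inter> S \<times> S)\<^sup>*" for b
    using that
  proof (induction rule: rtrancl_induct)
    case base then show ?case using wm0 by simp
  next
    case (step y z)
    then show ?case using hprop[of y z] by auto
  qed
  then have "\<forall>b\<in>S. w b = 0" using sc m0 by auto
  then show ?thesis by (auto simp: w_def)
qed

lemma snorm_P_lower:
  fixes coal :: "'v::finite \<Rightarrow> 'c::finite"
  assumes npos: "0 < ncard coal i"
  shows "(\<Sum>j\<in>memb coal i. (u j)\<^sup>2) / (real (ncard coal i)) ^ 3 \<le> (snorm (Pmat coal u i))\<^sup>2"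
proof -
  let ?S = "memb coal i" let ?n = "real (ncard coal i)" let ?U = "\<Sum>j\<in>memb coal i. (u j)\<^sup>2"
  define y :: "real^'v" where "y = (\<chi> b. if coal b = i then u b else 0)"
  have Py: "(Pmat coal u i *v y) $ a = (if coal a = i then ?U / ?n\<^sup>2 else 0)" for a
  proof -
    have "(Pmat coal u i *v y) $ a = (\<Sum>b\<in>UNIV. if coal a = i \<and> coal b = i then (u b)\<^sup>2 / ?n\<^sup>2 else 0)"
      unfolding matrix_vector_mult_def Pmat_def y_def
      by (simp, intro sum.cong) (auto simp: power2_eq_square)
    also have "\<dots> = (if coal a = i then ?U / ?n\<^sup>2 else 0)"
      by (auto simp: sum.If_cases memb_def sum_divide_distrib Collect_conj_eq[symmetric] cong: conj_cong)
    finally show ?thesis .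
  qed
  have ny: "(norm y)\<^sup>2 = ?U"
  proof -
    have "(norm y)\<^sup>2 = (\<Sum>b\<in>UNIV. if coal b = i then (u b)\<^sup>2 else 0)"
      unfolding power2_norm_eq_inner inner_vec_def y_def
      by (intro sum.cong) (auto simp: power2_eq_square)
    also have "\<dots> = ?U" by (simp add: sum.If_cases memb_def)
    finally show ?thesis .
  qed
  have nPy: "(norm (Pmat coal u i *v y))\<^sup>2 = ?n * (?U / ?n\<^sup>2)\<^sup>2"
  proof -
    have "(norm (Pmat coal u i *v y))\<^sup>2 = (\<Sum>b\<in>UNIV. if coal b = i then (?U / ?n\<^sup>2)\<^sup>2 else 0)"
      unfolding power2_norm_eq_inner inner_vec_def Py
      by (intro sum.cong) (auto simp: power2_eq_square)
    also have "\<dots> = ?n * (?U / ?n\<^sup>2)\<^sup>2" by (simp add: sum.If_cases memb_def ncard_def)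
    finally show ?thesis .
  qed
  have b: "norm (Pmat coal u i *v y) \<le> snorm (Pmat coal u i) * norm y" by (rule snorm_bound)
  have "(norm (Pmat coal u i *v y))\<^sup>2 \<le> (snorm (Pmat coal u i) * norm y)\<^sup>2"
    using b by (intro power_mono) auto
  then have main: "?n * (?U / ?n\<^sup>2)\<^sup>2 \<le> (snorm (Pmat coal u i))\<^sup>2 * ?U"
    by (simp add: nPy power_mult_distrib ny)
  have n0: "0 < ?n" using npos by simp
  show ?thesis
  proof (cases "?U = 0")
    case True then show ?thesis by simp
  next
    case False
    then have U0: "0 < ?U" by (metis less_eq_real_def sum_nonneg zero_le_power2)
    have "?n * (?U / ?n\<^sup>2)\<^sup>2 = ?U * (?U / ?n ^ 3)"
      using n0 by (simp add: power2_eq_square power3_eq_cube field_simps)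
    with main have h: "?U * (?U / ?n ^ 3) \<le> ?U * (snorm (Pmat coal u i))\<^sup>2" by (simp add: mult.commute)
    from h show ?thesis by (simp only: mult_le_cancel_left_pos[OF U0])
  qed
qed



lemma snorm_H_ge1:
  fixes E :: "('v::finite \<times> 'v) set" and W :: "real^('v \<times> 'v)^('v \<times> 'v)"
  assumes W_lyap: "transpose (Mmat E) ** W ** Mmat E - W = - mat 1"
  shows "1 \<le> snorm (Hmat E)"
proof -
  have "\<exists>v. deg E v \<noteq> 0"
  proof (rule ccontr)
    assume "\<not> (\<exists>v. deg E v \<noteq> 0)"
    then have d0: "deg E v = 0" for v by simp
    have a0: "adj E v w = 0" for v w using adj_le_deg[of E v w] adj_nonneg[of E v w] d0[of v] by simp
    have "Mmat E *v e = e" for e :: "real^('v \<times> 'v)"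
      by (simp add: vec_eq_iff Mmat_apply d0 a0)
    then have "Mmat E = mat 1" by (simp add: matrix_eq)
    then have "(- mat 1 :: real^('v \<times> 'v)^('v \<times> 'v)) = 0" using W_lyap by simp
    then have "(- mat 1 :: real^('v \<times> 'v)^('v \<times> 'v)) $ (undefined, undefined) $ (undefined, undefined) = 0" by simp
    then show False by (simp add: mat_def)
  qed
  then obtain v where dv: "deg E v \<noteq> 0" by blast
  define y :: "real^('v \<times> 'v)" where "y = axis (v, v) 1"
  have ysum: "(\<Sum>w\<in>UNIV. adj E v w * y $ (w, v)) = 0"
  proof -
    have "(\<Sum>w\<in>UNIV. adj E v w * y $ (w, v)) = (\<Sum>w\<in>UNIV. if w = v then adj E v v else 0)"
      by (rule sum.cong) (auto simp: y_def axis_def)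
    then show ?thesis by simp
  qed
  have My: "(Mmat E *v y) $ (v, v) = 0"
    unfolding Mmat_apply ysum using dv by (simp add: y_def)
  have Hy: "(Hmat E *v y) $ (v, v) = 1"
  proof -
    have "Hmat E = mat 1 - Mmat E" by (simp add: Mmat_def)
    then show ?thesis using My by (simp add: matrix_vector_mult_diff_rdistrib y_def)
  qed
  have "1 \<le> norm (Hmat E *v y)" using component_le_norm_cart[of "Hmat E *v y" "(v, v)"] Hy by simp
  also have "\<dots> \<le> snorm (Hmat E) * norm y" by (rule snorm_bound)
  also have "norm y = 1" by (simp add: y_def)
  finally show ?thesis by simp
qed

lemma tracking:
  fixes coal :: "'v::finite \<Rightarrow> 'c::finite"
  assumes psi_init: "\<forall>v m. coal m = coal v \<longrightarrow> psi 0 v m = pd (f v) (xi 0 v) m"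
    and psi_upd: "\<forall>k v m. coal m = coal v \<longrightarrow> psi (Suc k) v m =
        (\<Sum>w\<in>memb coal (coal v). c v w * psi k w m)
        + pd (f v) (xi (Suc k) v) m - pd (f v) (xi k v) m"
    and ccol: "\<forall>w. (\<Sum>j\<in>memb coal (coal w). c j w) = 1"
    and m: "coal m = i"
  shows "(\<Sum>j\<in>memb coal i. psi k j m) = (\<Sum>j\<in>memb coal i. pd (f j) (xi k j) m)"
proof (induction k)
  case 0
  show ?case by (rule sum.cong) (auto simp: memb_def psi_init m)
next
  case (Suc k)
  let ?S = "memb coal i"
  have "(\<Sum>j\<in>?S. psi (Suc k) j m) = (\<Sum>j\<in>?S. (\<Sum>w\<in>?S. c j w * psi k w m)
        + pd (f j) (xi (Suc k) j) m - pd (f j) (xi k j) m)"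
    by (rule sum.cong) (auto simp: memb_def psi_upd m)
  also have "\<dots> = (\<Sum>j\<in>?S. \<Sum>w\<in>?S. c j w * psi k w m) + (\<Sum>j\<in>?S. pd (f j) (xi (Suc k) j) m)
        - (\<Sum>j\<in>?S. pd (f j) (xi k j) m)"
    by (simp add: sum.distrib sum_subtractf)
  also have "(\<Sum>j\<in>?S. \<Sum>w\<in>?S. c j w * psi k w m) = (\<Sum>w\<in>?S. (\<Sum>j\<in>?S. c j w) * psi k w m)"
    by (subst sum.swap) (simp add: sum_distrib_right)
  also have "\<dots> = (\<Sum>w\<in>?S. psi k w m)"
  proof (rule sum.cong)
    fix w assume "w \<in> ?S"
    then have "coal w = i" by (simp add: memb_def)
    then show "(\<Sum>j\<in>?S. c j w) * psi k w m = psi k w m" using ccol[rule_format, of w] by simp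
  qed simp
  finally show ?case using Suc.IH by simp
qed

lemma lip_pd:
  fixes g :: "real^'v::finite \<Rightarrow> real"
  assumes "l-lipschitz_on UNIV (grad g)"
  shows "(\<Sum>m\<in>S. pd g a m - pd g b m)\<^sup>2 \<le> real (card S) * l\<^sup>2 * (norm (a - b))\<^sup>2"
proof -
  have "(\<Sum>m\<in>S. pd g a m - pd g b m)\<^sup>2 \<le> real (card S) * (\<Sum>m\<in>S. (pd g a m - pd g b m)\<^sup>2)"
    by (rule sum_sq_le_card)
  also have "(\<Sum>m\<in>S. (pd g a m - pd g b m)\<^sup>2) \<le> (\<Sum>m\<in>UNIV. (pd g a m - pd g b m)\<^sup>2)"
    by (rule sum_mono2) auto
  also have "\<dots> = (norm (grad g a - grad g b))\<^sup>2"
    by (simp add: norm_sq grad_def)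
  also have "\<dots> \<le> (l * norm (a - b))\<^sup>2"
  proof -
    have "dist (grad g a) (grad g b) \<le> l * dist a b" using lipschitz_onD[OF assms] by auto
    then show ?thesis by (simp add: dist_norm power_mono)
  qed
  finally show ?thesis by (simp add: power_mult_distrib mult.assoc mult_left_mono)
qed

lemma NE_stat:
  fixes coal :: "'v::finite \<Rightarrow> 'c::finite" and f :: "'v \<Rightarrow> real^'v \<Rightarrow> real"
  assumes C2: "\<forall>v. C2 (f v)" and NE: "is_NE coal f ystar"
  shows "(\<Sum>v\<in>memb coal i. \<Sum>m\<in>memb coal i. pd (f v) (\<chi> w. ystar $ coal w) m) = 0"
proof -
  let ?S = "memb coal i"
  define xs :: "real^'v" where "xs = (\<chi> w. ystar $ coal w)"
  define one :: "real^'v" where "one = (\<chi> w. if coal w = i then 1 else 0)"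
  define c0 :: "real^'v" where "c0 = (\<chi> w. if coal w = i then 0 else ystar $ coal w)"
  define h where "h t = c0 + t *\<^sub>R one" for t :: real
  define t0 where "t0 = ystar $ i"
  have ht0: "h t0 = xs" by (simp add: h_def c0_def one_def xs_def t0_def vec_eq_iff)
  have hh: "(\<chi> w. (\<chi> c. if c = i then t else ystar $ c) $ coal w) = h t" for t
    by (simp add: h_def c0_def one_def vec_eq_iff)
  have gc: "gcost coal f i (\<chi> c. if c = i then t else ystar $ c) = (\<Sum>v\<in>?S. f v (h t))" for t
    unfolding gcost_def hh ..
  have gc0: "gcost coal f i ystar = (\<Sum>v\<in>?S. f v (h t0))"
  proof -
    have "(\<chi> c. if c = i then t0 else ystar $ c) = ystar" by (simp add: vec_eq_iff t0_def)
    then show ?thesis using gc[of t0] by simp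
  qed
  have min: "(\<Sum>v\<in>?S. f v (h t0)) \<le> (\<Sum>v\<in>?S. f v (h t))" for t
    using NE[unfolded is_NE_def, rule_format, of i t] gc gc0 by simp
  have hder: "(h has_derivative (\<lambda>s. s *\<^sub>R one)) (at t)" for t
    unfolding h_def by (auto intro!: derivative_eq_intros)
  obtain D :: "'v \<Rightarrow> (real^'v) \<Rightarrow> ((real^'v) \<Rightarrow>\<^sub>L real)" where
    D: "\<And>v x. (f v has_derivative blinfun_apply (D v x)) (at x)"
    using C2 unfolding C2_def by metis
  have der1: "((\<lambda>t. f v (h t)) has_field_derivative blinfun_apply (D v xs) one) (at t0)" for v
  proof -
    have "((f v \<circ> h) has_derivative (blinfun_apply (D v (h t0)) \<circ> (\<lambda>s. s *\<^sub>R one))) (at t0)"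
      by (rule diff_chain_at[OF hder D])
    then have "((\<lambda>t. f v (h t)) has_derivative (blinfun_apply (D v xs) \<circ> (\<lambda>s. s *\<^sub>R one))) (at t0)"
      by (simp add: o_def ht0)
    then show ?thesis
      by (rule has_derivative_imp_has_field_derivative) (simp add: blinfun.scaleR_right)
  qed
  have der: "((\<lambda>t. \<Sum>v\<in>?S. f v (h t)) has_field_derivative (\<Sum>v\<in>?S. blinfun_apply (D v xs) one)) (at t0)"
    by (rule DERIV_sum) (rule der1)
  have zero: "(\<Sum>v\<in>?S. blinfun_apply (D v xs) one) = 0"
    by (rule DERIV_local_min[OF der, of 1]) (use min in auto)
  have one_sum: "one = (\<Sum>m\<in>?S. axis m 1)"
    by (simp add: one_def vec_eq_iff axis_def memb_def sum.If_cases)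
  have pdD: "pd (f v) xs m = blinfun_apply (D v xs) (axis m 1)" for v m
    unfolding pd_def using frechet_derivative_at[OF D[of v xs]] by simp
  have "(\<Sum>v\<in>?S. \<Sum>m\<in>?S. pd (f v) xs m) = (\<Sum>v\<in>?S. blinfun_apply (D v xs) one)"
    unfolding pdD one_sum by (simp add: blinfun.sum_right)
  then show ?thesis using zero by (simp add: xs_def)
qed



lemma sumsq_le_sq_sum:
  fixes u :: "'a \<Rightarrow> real"
  assumes "finite S" "\<forall>j\<in>S. 0 \<le> u j"
  shows "(\<Sum>j\<in>S. (u j)\<^sup>2) \<le> (\<Sum>j\<in>S. u j)\<^sup>2"
proof -
  have "(\<Sum>j\<in>S. (u j)\<^sup>2) \<le> (\<Sum>j\<in>S. u j * (\<Sum>i\<in>S. u i))"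
    using assms by (intro sum_mono) (auto simp: power2_eq_square intro!: mult_left_mono member_le_sum)
  also have "\<dots> = (\<Sum>j\<in>S. u j)\<^sup>2" by (simp add: power2_eq_square sum_distrib_right)
  finally show ?thesis .
qed

lemma coal_key:
  fixes u vv :: "'a \<Rightarrow> real" and ps :: "'a \<Rightarrow> 'a \<Rightarrow> real"
  assumes fin: "finite S" and n_def: "n = real (card S)" and n1: "1 \<le> n"
    and u_nn: "\<forall>j\<in>S. 0 \<le> u j" and u_sum: "(\<Sum>j\<in>S. u j) = n" and v_sum: "(\<Sum>j\<in>S. vv j) = n"
    and K: "(\<Sum>m\<in>S. (\<Sum>j\<in>S. ps j m) / n)\<^sup>2 \<le> K"
  shows "(2 * n + 1) / (4 * n) * (\<Sum>j\<in>S. u j * (\<Sum>m\<in>S. ps j m))\<^sup>2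
     \<le> (\<Sum>j\<in>S. (u j)\<^sup>2) * (n * (\<Sum>j\<in>S. \<Sum>m\<in>S. (ps j m - vv j * ((\<Sum>j'\<in>S. ps j' m) / n))\<^sup>2))
       + (\<Sum>j\<in>S. (u j)\<^sup>2) * ((\<Sum>j\<in>S. (vv j)\<^sup>2) * K)"
proof -
  define pb where "pb m = (\<Sum>j\<in>S. ps j m) / n" for m
  define a where "a j = (\<Sum>m\<in>S. ps j m - vv j * pb m)" for j
  define Sg where "Sg = (\<Sum>m\<in>S. pb m)"
  define U where "U = (\<Sum>j\<in>S. (u j)\<^sup>2)"
  define V2 where "V2 = (\<Sum>j\<in>S. (vv j)\<^sup>2)"
  define Ep where "Ep = (\<Sum>j\<in>S. \<Sum>m\<in>S. (ps j m - vv j * pb m)\<^sup>2)"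
  have n0: "n \<noteq> 0" using n1 by simp
  have s_split: "(\<Sum>m\<in>S. ps j m) = a j + vv j * Sg" for j
    by (simp add: a_def Sg_def sum_subtractf sum_distrib_left)
  have asum: "(\<Sum>j\<in>S. a j) = 0"
  proof -
    have "(\<Sum>j\<in>S. a j) = (\<Sum>m\<in>S. (\<Sum>j\<in>S. ps j m) - (\<Sum>j\<in>S. vv j) * pb m)"
      unfolding a_def by (subst sum.swap) (simp add: sum_subtractf sum_distrib_right)
    also have "\<dots> = 0" using n0 by (simp add: v_sum pb_def)
    finally show ?thesis .
  qed
  have us: "(\<Sum>j\<in>S. u j * (\<Sum>m\<in>S. ps j m)) = (\<Sum>j\<in>S. u j * a j) + (\<Sum>j\<in>S. u j * vv j) * Sg"
    by (simp add: s_split distrib_left sum.distrib sum_distrib_right mult.assoc)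
  have hP0: "(\<Sum>j\<in>S. u j * a j)\<^sup>2 \<le> (U - n) * (\<Sum>j\<in>S. (a j)\<^sup>2)"
    using ua_bound[OF fin asum, of u] u_sum n_def by (simp add: U_def)
  have Un: "n \<le> U"
  proof -
    have "n\<^sup>2 \<le> n * U" using sum_sq_le_card[of u S] u_sum n_def by (simp add: U_def)
    then show ?thesis using n1 by (simp add: power2_eq_square)
  qed
  have asq: "(\<Sum>j\<in>S. (a j)\<^sup>2) \<le> n * Ep"
  proof -
    have "(\<Sum>j\<in>S. (a j)\<^sup>2) \<le> (\<Sum>j\<in>S. n * (\<Sum>m\<in>S. (ps j m - vv j * pb m)\<^sup>2))"
      unfolding a_def n_def by (intro sum_mono sum_sq_le_card)
    then show ?thesis by (simp add: Ep_def sum_distrib_left)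
  qed
  have hP: "(\<Sum>j\<in>S. u j * a j)\<^sup>2 \<le> (U - n) * (n * Ep)"
    using hP0 mult_left_mono[OF asq, of "U - n"] Un by simp
  have hQ: "((\<Sum>j\<in>S. u j * vv j) * Sg)\<^sup>2 \<le> U * (V2 * K)"
  proof -
    have "((\<Sum>j\<in>S. u j * vv j) * Sg)\<^sup>2 = (\<Sum>j\<in>S. u j * vv j)\<^sup>2 * Sg\<^sup>2" by (simp add: power_mult_distrib)
    also have "\<dots> \<le> (U * V2) * K"
      using cs_sum[of u vv S] K by (intro mult_mono) (auto simp: U_def V2_def Sg_def pb_def sum_nonneg)
    finally show ?thesis by (simp add: mult.assoc)
  qed
  have Uub: "U \<le> n\<^sup>2" using sumsq_le_sq_sum[OF fin u_nn] u_sum by (simp add: U_def)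
  have Ep0: "0 \<le> n * Ep" using n1 by (simp add: Ep_def sum_nonneg)
  have "(2 * n + 1) / (4 * n) * ((\<Sum>j\<in>S. u j * a j) + (\<Sum>j\<in>S. u j * vv j) * Sg)\<^sup>2 \<le> U * (n * Ep) + U * (V2 * K)"
    by (rule key_alg[OF n1 Uub hP hQ Ep0])
  then show ?thesis unfolding us by (simp add: U_def Ep_def V2_def pb_def)
qed

lemma young_sq:
  fixes a b t :: real
  assumes "0 < t"
  shows "(a + b)\<^sup>2 \<le> (1 + t) * a\<^sup>2 + (1 + 1 / t) * b\<^sup>2"
proof -
  have "0 \<le> (t * a - b)\<^sup>2 / t" using assms by simp
  also have "(t * a - b)\<^sup>2 / t = t * a\<^sup>2 - 2 * a * b + b\<^sup>2 / t"
    using assms by (simp add: power2_eq_square field_simps)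
  finally have "2 * a * b \<le> t * a\<^sup>2 + b\<^sup>2 / t" by simp
  then show ?thesis by (simp add: power2_eq_square algebra_simps)
qed



lemma Sg_bound:
  fixes coal :: "'v::finite \<Rightarrow> 'c::finite" and f :: "'v \<Rightarrow> real^'v \<Rightarrow> real"
    and Xi :: "'v \<Rightarrow> real^'v" and xk :: "real^'v" and ps :: "'v \<Rightarrow> 'v \<Rightarrow> real"
  assumes C2: "\<forall>v. C2 (f v)" and lip: "\<forall>v. (l v)-lipschitz_on UNIV (grad (f v))"
    and NE: "is_NE coal f ystar"
    and trk: "\<forall>m. coal m = i \<longrightarrow> (\<Sum>j\<in>memb coal i. ps j m) = (\<Sum>j\<in>memb coal i. pd (f j) (Xi j) m)"
    and npos: "0 < ncard coal i"
  shows "(\<Sum>m\<in>memb coal i. (\<Sum>j\<in>memb coal i. ps j m) / real (ncard coal i))\<^sup>2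
     \<le> (\<Sum>j\<in>memb coal i. (l j)\<^sup>2) * (1 / real (ncard coal i) + real (Max (range (ncard coal))))
        * ((\<Sum>j\<in>memb coal i. \<Sum>p\<in>UNIV. (e_xi coal u xk Xi $ (j, p))\<^sup>2)
           + (norm (e_xbar coal u ystar xk))\<^sup>2)"
proof -
  let ?S = "memb coal i"
  define n where "n = real (ncard coal i)"
  define Mx where "Mx = real (Max (range (ncard coal)))"
  define xs :: "real^'v" where "xs = (\<chi> w. ystar $ coal w)"
  define D where "D j = (\<Sum>m\<in>?S. pd (f j) (Xi j) m - pd (f j) xs m)" for j
  define d where "d j = norm (Xi j - xs)" for j
  define L where "L = (\<Sum>j\<in>?S. (l j)\<^sup>2)"
  define Exi where "Exi = (\<Sum>j\<in>?S. \<Sum>p\<in>UNIV. (e_xi coal u xk Xi $ (j, p))\<^sup>2)"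
  define Exb where "Exb = (norm (e_xbar coal u ystar xk))\<^sup>2"
  have n1: "1 \<le> n" using npos by (simp add: n_def)
  have cardS: "real (card ?S) = n" by (simp add: n_def ncard_def)
  have Mxn: "real (ncard coal c) \<le> Mx" for c
    unfolding Mx_def by (simp add: Max_ge)
  have Mx1: "1 \<le> Mx" using Mxn[of i] n1 n_def by simp
  have l0: "0 \<le> l j" for j using lip lipschitz_on_nonneg by blast
  have Sg: "(\<Sum>m\<in>?S. (\<Sum>j\<in>?S. ps j m) / n) = (\<Sum>j\<in>?S. D j) / n"
  proof -
    have "(\<Sum>m\<in>?S. (\<Sum>j\<in>?S. ps j m) / n) = (\<Sum>m\<in>?S. \<Sum>j\<in>?S. pd (f j) (Xi j) m) / n"
    proof -
      have "(\<Sum>m\<in>?S. (\<Sum>j\<in>?S. ps j m) / n) = (\<Sum>m\<in>?S. (\<Sum>j\<in>?S. pd (f j) (Xi j) m) / n)"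
      proof (rule sum.cong[OF refl])
        fix m assume "m \<in> ?S"
        then have "coal m = i" by (simp add: memb_def)
        then show "(\<Sum>j\<in>?S. ps j m) / n = (\<Sum>j\<in>?S. pd (f j) (Xi j) m) / n" using trk by simp
      qed
      then show ?thesis by (simp add: sum_divide_distrib)
    qed
    also have "(\<Sum>m\<in>?S. \<Sum>j\<in>?S. pd (f j) (Xi j) m) = (\<Sum>j\<in>?S. \<Sum>m\<in>?S. pd (f j) (Xi j) m)"
      by (rule sum.swap)
    also have "\<dots> = (\<Sum>j\<in>?S. D j) + (\<Sum>j\<in>?S. \<Sum>m\<in>?S. pd (f j) xs m)"
      by (simp add: D_def sum_subtractf sum.distrib[symmetric])
    also have "(\<Sum>j\<in>?S. \<Sum>m\<in>?S. pd (f j) xs m) = 0"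
      unfolding xs_def by (rule NE_stat[OF C2 NE])
    finally show ?thesis by simp
  qed
  have Dj: "\<bar>D j\<bar> \<le> sqrt n * (l j * d j)" for j
  proof -
    have "(D j)\<^sup>2 \<le> n * (l j)\<^sup>2 * (d j)\<^sup>2"
      unfolding D_def d_def using lip_pd[OF lip[rule_format, of j], where S="?S" and a="Xi j" and b=xs] cardS by simp
    also have "\<dots> = (sqrt n * (l j * d j))\<^sup>2" using n1 by (simp add: power_mult_distrib)
    finally have "(D j)\<^sup>2 \<le> (sqrt n * (l j * d j))\<^sup>2" .
    then have "\<bar>D j\<bar> \<le> \<bar>sqrt n * (l j * d j)\<bar>" by (simp only: abs_le_square_iff)
    then show ?thesis using l0[of j] n1 by (simp add: d_def abs_mult)
  qed
  have sumD: "(\<Sum>j\<in>?S. D j)\<^sup>2 \<le> n * (L * (\<Sum>j\<in>?S. (d j)\<^sup>2))"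
  proof -
    have a: "\<bar>\<Sum>j\<in>?S. D j\<bar> \<le> (\<Sum>j\<in>?S. sqrt n * (l j * d j))"
      using sum_abs[of D ?S] sum_mono[of ?S "\<lambda>j. \<bar>D j\<bar>", OF Dj] by linarith
    have b: "0 \<le> (\<Sum>j\<in>?S. sqrt n * (l j * d j))" using l0 n1 by (intro sum_nonneg) (simp add: d_def)
    have "(\<Sum>j\<in>?S. D j)\<^sup>2 \<le> (\<Sum>j\<in>?S. sqrt n * (l j * d j))\<^sup>2"
      using a b by (metis abs_le_square_iff abs_of_nonneg)
    also have "\<dots> = n * (\<Sum>j\<in>?S. l j * d j)\<^sup>2"
      using n1 by (simp add: sum_distrib_left[symmetric] power_mult_distrib)
    also have "\<dots> \<le> n * (L * (\<Sum>j\<in>?S. (d j)\<^sup>2))"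
      using cs_sum[of l d ?S] n1 by (intro mult_left_mono) (auto simp: L_def)
    finally show ?thesis .
  qed
  have dsum: "(\<Sum>j\<in>?S. (d j)\<^sup>2) \<le> (1 + n * Mx) * (Exi + Exb)"
  proof -
    define t where "t = n * Mx"
    have t0: "0 < t" using n1 Mx1 by (simp add: t_def)
    define eb where "eb c = xbar coal u xk c - ystar $ c" for c
    have dj: "(d j)\<^sup>2 \<le> (1 + t) * (\<Sum>p\<in>UNIV. (e_xi coal u xk Xi $ (j, p))\<^sup>2) + (1 + 1 / t) * (Mx * Exb)" for j
    proof -
      have "(d j)\<^sup>2 = (\<Sum>p\<in>UNIV. (e_xi coal u xk Xi $ (j, p) + eb (coal p))\<^sup>2)"
        by (simp add: d_def norm_sq xs_def e_xi_def eb_def)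
      also have "\<dots> \<le> (\<Sum>p\<in>UNIV. (1 + t) * (e_xi coal u xk Xi $ (j, p))\<^sup>2 + (1 + 1 / t) * (eb (coal p))\<^sup>2)"
        by (intro sum_mono young_sq t0)
      also have "\<dots> = (1 + t) * (\<Sum>p\<in>UNIV. (e_xi coal u xk Xi $ (j, p))\<^sup>2) + (1 + 1 / t) * (\<Sum>p\<in>UNIV. (eb (coal p))\<^sup>2)"
        by (simp add: sum.distrib sum_distrib_left)
      also have "(\<Sum>p\<in>UNIV. (eb (coal p))\<^sup>2) \<le> Mx * Exb"
      proof -
        have "(\<Sum>p\<in>UNIV. (eb (coal p))\<^sup>2) = (\<Sum>c\<in>UNIV. real (ncard coal c) * (eb c)\<^sup>2)"
          by (subst sum_group_coal[of _ coal]) (simp add: memb_def ncard_def)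
        also have "\<dots> \<le> (\<Sum>c\<in>UNIV. Mx * (eb c)\<^sup>2)"
          by (intro sum_mono mult_right_mono Mxn) simp
        also have "\<dots> = Mx * Exb"
          by (simp add: Exb_def norm_sq e_xbar_def eb_def sum_distrib_left)
        finally show ?thesis .
      qed
      then have "(1 + 1 / t) * (\<Sum>p\<in>UNIV. (eb (coal p))\<^sup>2) \<le> (1 + 1 / t) * (Mx * Exb)"
        using t0 by (intro mult_left_mono) auto
      finally show ?thesis by simp
    qed
    have "(\<Sum>j\<in>?S. (d j)\<^sup>2) \<le> (\<Sum>j\<in>?S. (1 + t) * (\<Sum>p\<in>UNIV. (e_xi coal u xk Xi $ (j, p))\<^sup>2) + (1 + 1 / t) * (Mx * Exb))"
      by (intro sum_mono dj)
    also have "\<dots> = (1 + t) * Exi + n * ((1 + 1 / t) * (Mx * Exb))"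
      by (simp add: sum.distrib sum_distrib_left Exi_def cardS)
    also have "n * ((1 + 1 / t) * (Mx * Exb)) = (1 + t) * Exb"
      using t0 n1 Mx1 by (simp add: t_def field_simps)
    finally show ?thesis by (simp add: t_def algebra_simps)
  qed
  have "(\<Sum>m\<in>?S. (\<Sum>j\<in>?S. ps j m) / n)\<^sup>2 = (\<Sum>j\<in>?S. D j)\<^sup>2 / n\<^sup>2"
    by (simp add: Sg power_divide)
  also have "\<dots> \<le> n * (L * ((1 + n * Mx) * (Exi + Exb))) / n\<^sup>2"
  proof -
    have "(\<Sum>j\<in>?S. D j)\<^sup>2 \<le> n * (L * ((1 + n * Mx) * (Exi + Exb)))"
      using sumD mult_left_mono[OF dsum, of L] mult_left_mono[of _ _ n] n1
      by (smt (verit, best) L_def mult_left_mono sum_nonneg zero_le_power2)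
    then show ?thesis by (intro divide_right_mono) auto
  qed
  also have "\<dots> = L * (1 / n + Mx) * (Exi + Exb)"
    using n1 by (simp add: power2_eq_square field_simps)
  finally show ?thesis by (simp add: n_def Mx_def L_def Exi_def Exb_def)
qed



theorem lemma3:
  fixes coal :: "'v::finite \<Rightarrow> 'c::finite"
    and E :: "('v \<times> 'v) set"
    and f :: "'v \<Rightarrow> real^'v \<Rightarrow> real"
    and l :: "'v \<Rightarrow> real"
    and ystar :: "real^'c"
    and r c :: "'v \<Rightarrow> 'v \<Rightarrow> real"
    and u vv :: "'v \<Rightarrow> real"
    and W :: "real^('v \<times> 'v)^('v \<times> 'v)"
    and \<alpha> :: real
    and x :: "nat \<Rightarrow> real^'v"
    and xi :: "nat \<Rightarrow> 'v \<Rightarrow> real^'v"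
    and psi :: "nat \<Rightarrow> 'v \<Rightarrow> 'v \<Rightarrow> real"
    and k :: nat
  assumes coal_surj: "surj coal"
    and A1_G: "strongly_connected_on UNIV E"
    and A1_Gi: "\<forall>i. strongly_connected_on (memb coal i) E"
    and A2: "\<forall>v. convex_on UNIV (f v) \<and> C2 (f v) \<and> (l v)-lipschitz_on UNIV (grad (f v))"
    and NE: "is_NE coal f ystar"
    and r_pos: "\<forall>v w. w \<in> Nin_c E coal v \<union> {v} \<longrightarrow> r v w > 0"
    and r_sum: "\<forall>v. (\<Sum>w\<in>Nin_c E coal v \<union> {v}. r v w) = 1"
    and r_zero: "\<forall>v w. coal w = coal v \<and> w \<notin> Nin_c E coal v \<union> {v} \<longrightarrow> r v w = 0"
    and c_pos: "\<forall>v w. w \<in> Nout_c E coal v \<union> {v} \<longrightarrow> c w v > 0"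
    and c_sum: "\<forall>v. (\<Sum>w\<in>Nout_c E coal v \<union> {v}. c w v) = 1"
    and c_zero: "\<forall>v w. coal w = coal v \<and> w \<notin> Nout_c E coal v \<union> {v} \<longrightarrow> c w v = 0"
    and u_left: "\<forall>i m. coal m = i \<longrightarrow> (\<Sum>j\<in>memb coal i. u j * r j m) = u m"
    and u_norm: "\<forall>i. (\<Sum>j\<in>memb coal i. u j) = real (ncard coal i)"
    and v_right: "\<forall>i j. coal j = i \<longrightarrow> (\<Sum>m\<in>memb coal i. c j m * vv m) = vv j"
    and v_norm: "\<forall>i. (\<Sum>j\<in>memb coal i. vv j) = real (ncard coal i)"
    and W_sym: "transpose W = W"
    and W_pd: "\<forall>z. z \<noteq> 0 \<longrightarrow> z \<bullet> (W *v z) > 0"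
    and W_lyap: "transpose (Mmat E) ** W ** Mmat E - W = - mat 1"
    and alpha_pos: "\<alpha> > 0"
    and psi_init: "\<forall>v m. coal m = coal v \<longrightarrow> psi 0 v m = pd (f v) (xi 0 v) m"
    and x_upd: "\<forall>k v. x (Suc k) $ v =
        (\<Sum>m\<in>memb coal (coal v). r v m * x k $ m)
        - \<alpha> / real (ncard coal (coal v)) * (\<Sum>m\<in>memb coal (coal v). psi k v m)"
    and xi_upd: "\<forall>k v p. xi (Suc k) v $ p = xi k v $ p
        - 1 / (deg E v + adj E v p) *
          ((\<Sum>w\<in>Nin E v. xi k v $ p - xi k w $ p) + adj E v p * (xi k v $ p - x k $ p))"
    and psi_upd: "\<forall>k v m. coal m = coal v \<longrightarrow> psi (Suc k) v m =
        (\<Sum>w\<in>memb coal (coal v). c v w * psi k w m)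
        + pd (f v) (xi (Suc k) v) m - pd (f v) (xi k v) m"
  shows "Vxi W (e_xi coal u (x (Suc k)) (xi (Suc k))) - Vxi W (e_xi coal u (x k) (xi k))
     \<le> - (1/2) * (norm (e_xi coal u (x k) (xi k)))\<^sup>2
       + beta_xix E W * (norm (e_x coal u (x k)))\<^sup>2
       + \<alpha>\<^sup>2 * (MAX i\<in>UNIV. b2 E W coal u vv l i) *
         ((norm (e_psi coal vv (psi k)))\<^sup>2 + (norm (e_xi coal u (x k) (xi k)))\<^sup>2
          + real CARD('c) * (norm (e_xbar coal u ystar (x k)))\<^sup>2)"
proof -
  let ?nsum = "real CARD('v)"
  let ?Mx = "real (Max (range (ncard coal)))"
  have fin: "finite (memb coal i)" for i by simp
  have npos: "0 < ncard coal i" for i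
  proof -
    obtain v where "coal v = i" using coal_surj by (metis surjD)
    then have "v \<in> memb coal i" by (simp add: memb_def)
    then show ?thesis unfolding ncard_def using fin[of i] card_gt_0_iff by blast
  qed
  have rows: "(\<Sum>m\<in>memb coal (coal j). r j m) = 1" for j
  proof -
    have "(\<Sum>m\<in>memb coal (coal j). r j m) = (\<Sum>m\<in>Nin_c E coal j \<union> {j}. r j m)"
    proof (rule sum.mono_neutral_right[OF fin])
      show "Nin_c E coal j \<union> {j} \<subseteq> memb coal (coal j)" by (auto simp: memb_def Nin_c_def)
      show "\<forall>m\<in>memb coal (coal j) - (Nin_c E coal j \<union> {j}). r j m = 0"
        using r_zero by (auto simp: memb_def)
    qed
    then show ?thesis using r_sum by simp
  qed
  have ccol: "\<forall>w. (\<Sum>j\<in>memb coal (coal w). c j w) = 1"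
  proof
    fix w
    have "(\<Sum>j\<in>memb coal (coal w). c j w) = (\<Sum>j\<in>Nout_c E coal w \<union> {w}. c j w)"
    proof (rule sum.mono_neutral_right[OF fin])
      show "Nout_c E coal w \<union> {w} \<subseteq> memb coal (coal w)" by (auto simp: memb_def Nout_c_def)
      show "\<forall>j\<in>memb coal (coal w) - (Nout_c E coal w \<union> {w}). c j w = 0"
        using c_zero by (auto simp: memb_def)
    qed
    then show "(\<Sum>j\<in>memb coal (coal w). c j w) = 1" using c_sum by simp
  qed
  have u_nn: "0 \<le> u m" for m
  proof -
    let ?S = "memb coal (coal m)"
    have r_nn: "\<forall>j\<in>?S. \<forall>m'\<in>?S. 0 \<le> r j m'"
    proof (intro ballI)
      fix j m' assume "j \<in> ?S" "m' \<in> ?S"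
      then have cc: "coal m' = coal j" by (simp add: memb_def)
      show "0 \<le> r j m'"
      proof (cases "m' \<in> Nin_c E coal j \<union> {j}")
        case True then show ?thesis using r_pos by (metis less_imp_le)
      next
        case False then show ?thesis using r_zero cc by simp
      qed
    qed
    have r_edge: "\<forall>j\<in>?S. \<forall>m'\<in>?S. (m', j) \<in> E \<longrightarrow> m' \<noteq> j \<longrightarrow> 0 < r j m'"
      using r_pos by (auto simp: memb_def Nin_c_def)
    have rows': "\<forall>j\<in>?S. (\<Sum>m'\<in>?S. r j m') = 1"
    proof
      fix j assume "j \<in> ?S"
      then have "coal j = coal m" by (simp add: memb_def)
      then show "(\<Sum>m'\<in>?S. r j m') = 1" using rows[of j] by simp
    qed
    have hfix: "\<forall>m'\<in>?S. (\<Sum>j\<in>?S. u j * r j m') = u m'"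
    proof
      fix m' assume "m' \<in> ?S"
      then have "coal m' = coal m" by (simp add: memb_def)
      then show "(\<Sum>j\<in>?S. u j * r j m') = u m'" using u_left[rule_format, where i="coal m" and m=m'] by simp
    qed
    have upos: "0 < (\<Sum>j\<in>?S. u j)" using u_norm npos by simp
    have sc: "\<forall>a\<in>?S. \<forall>b\<in>?S. (a, b) \<in> (E \<inter> ?S \<times> ?S)\<^sup>*"
      using A1_Gi unfolding strongly_connected_on_def by blast
    have "\<forall>m'\<in>?S. 0 \<le> u m'" by (rule perron_nonneg[OF fin r_nn r_edge rows' hfix upos sc])
    then show ?thesis by (simp add: memb_def)
  qed
  define e0 where "e0 = e_xi coal u (x k) (xi k)"
  define ex where "ex = e_x coal u (x k)"
  define Dl where "Dl i = xbar coal u (x (Suc k)) i - xbar coal u (x k) i" for i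
  define dvec :: "real^('v \<times> 'v)" where "dvec = (\<chi> r. adj E (fst r) (snd r) / (deg E (fst r) + adj E (fst r) (snd r)) * e_x coal u (x k) $ snd r
         - (xbar coal u (x (Suc k)) (coal (snd r)) - xbar coal u (x k) (coal (snd r))))"
  define cw where "cw = cW E W"
  define us where "us i = (\<Sum>j\<in>memb coal i. u j * (\<Sum>m\<in>memb coal i. psi k j m))" for i
  define T where "T i = (\<Sum>j\<in>memb coal i. \<Sum>m\<in>memb coal i. (psi k j m - vv j * ((\<Sum>j'\<in>memb coal i. psi k j' m) / real (ncard coal i)))\<^sup>2)
      + (\<Sum>j\<in>memb coal i. \<Sum>p\<in>UNIV. (e0 $ (j, p))\<^sup>2) + (norm (e_xbar coal u ystar (x k)))\<^sup>2" for i
  have cw0: "0 \<le> cw" unfolding cw_def cW_def by (simp add: snorm_nonneg)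
  have step1: "e_xi coal u (x (Suc k)) (xi (Suc k)) = Mmat E *v e0 + dvec"
    unfolding e0_def dvec_def by (rule exi_step) (use xi_upd in simp)
  have step2: "Vxi W (e_xi coal u (x (Suc k)) (xi (Suc k))) - Vxi W e0
      \<le> -(1/2) * (norm e0)\<^sup>2 + cw / 2 * (norm dvec)\<^sup>2"
  proof -
    have cwh: "cw / 2 = 2 * (snorm (transpose (Mmat E) ** W))\<^sup>2 + snorm W" by (simp add: cw_def cW_def)
    show ?thesis using lyap_step[OF W_sym W_lyap, of e0 dvec] unfolding Vxi_def step1 cwh by simp
  qed
  have step3: "(norm dvec)\<^sup>2 \<le> 5/4 * ?nsum * (norm ex)\<^sup>2 + ?nsum * (\<Sum>i\<in>UNIV. (real (ncard coal i) + 1/2) * (Dl i)\<^sup>2)"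
    unfolding dvec_def ex_def using d_bound[where E=E and ex="e_x coal u (x k)" and coal=coal and D=Dl] by (simp add: Dl_def)
  have Dl_eq: "Dl i = - (\<alpha> / (real (ncard coal i))\<^sup>2 * us i)" for i
  proof -
    have "\<forall>v. x (Suc k) $ v = (\<Sum>m\<in>memb coal (coal v). r v m * x k $ m)
        - \<alpha> / real (ncard coal (coal v)) * (\<Sum>m\<in>memb coal (coal v). psi k v m)"
      using x_upd by blast
    from xbar_step[OF u_left this] show ?thesis by (simp add: Dl_def us_def)
  qed
  have Hge: "1 \<le> snorm (Hmat E)" by (rule snorm_H_ge1[OF W_lyap])
  have step4: "cw / 2 * (5/4 * ?nsum * (norm ex)\<^sup>2) \<le> beta_xix E W * (norm ex)\<^sup>2"
  proof -
    have "1 \<le> (snorm (Hmat E))\<^sup>2" using Hge by (simp add: one_le_power)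
    then have "cw * 1 \<le> cw * (snorm (Hmat E))\<^sup>2" using cw0 by (rule mult_left_mono)
    then have "cw / 2 * (5/4) \<le> cw * (snorm (Hmat E))\<^sup>2" using cw0 by linarith
    then have "cw / 2 * (5/4) * (?nsum * (norm ex)\<^sup>2) \<le> cw * (snorm (Hmat E))\<^sup>2 * (?nsum * (norm ex)\<^sup>2)"
      by (rule mult_right_mono) simp
    then show ?thesis by (simp add: beta_xix_def cw_def algebra_simps)
  qed
  have T0: "0 \<le> T i" for i unfolding T_def by (intro add_nonneg_nonneg sum_nonneg) auto
  have step5: "cw / 2 * (?nsum * ((real (ncard coal i) + 1/2) * (Dl i)\<^sup>2)) \<le> \<alpha>\<^sup>2 * b2 E W coal u vv l i * T i" for i
  proof -
    let ?S = "memb coal i" let ?n = "real (ncard coal i)"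
    let ?U = "\<Sum>j\<in>?S. (u j)\<^sup>2" let ?V2 = "\<Sum>j\<in>?S. (vv j)\<^sup>2" let ?L = "\<Sum>j\<in>?S. (l j)\<^sup>2"
    let ?Ep = "\<Sum>j\<in>?S. \<Sum>m\<in>?S. (psi k j m - vv j * ((\<Sum>j'\<in>?S. psi k j' m) / ?n))\<^sup>2"
    let ?Ex = "(\<Sum>j\<in>?S. \<Sum>p\<in>UNIV. (e0 $ (j, p))\<^sup>2)"
    let ?Eb = "(norm (e_xbar coal u ystar (x k)))\<^sup>2"
    let ?K = "?L * (1 / ?n + ?Mx) * (?Ex + ?Eb)"
    have n1: "1 \<le> ?n" using npos[of i] by simp
    have trk: "\<forall>m. coal m = i \<longrightarrow> (\<Sum>j\<in>?S. psi k j m) = (\<Sum>j\<in>?S. pd (f j) (xi k j) m)"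
      using tracking[OF psi_init psi_upd ccol] by blast
    have C2: "\<forall>v. C2 (f v)" and lip: "\<forall>v. (l v)-lipschitz_on UNIV (grad (f v))" using A2 by auto
    have K: "(\<Sum>m\<in>?S. (\<Sum>j\<in>?S. psi k j m) / ?n)\<^sup>2 \<le> ?K"
      using Sg_bound[OF C2 lip NE trk npos[of i], of u "x k"] unfolding e0_def by simp
    have key: "(2 * ?n + 1) / (4 * ?n) * (us i)\<^sup>2 \<le> ?U * (?n * ?Ep) + ?U * (?V2 * ?K)"
      unfolding us_def
      by (rule coal_key[OF fin _ n1 _ _ _ K]) (auto simp: ncard_def u_nn u_norm v_norm)
    have b0T: "?n * ?Ep + ?V2 * ?K \<le> b0 coal vv l i * T i"
    proof -
      have Ep0: "0 \<le> ?Ep" by (simp add: sum_nonneg)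
      have Ex0: "0 \<le> ?Ex + ?Eb" by (simp add: sum_nonneg)
      have c0: "0 \<le> (1 / ?n + ?Mx) * ?V2 * ?L" using n1 by (simp add: sum_nonneg)
      have "b0 coal vv l i * T i = (?n + (1 / ?n + ?Mx) * ?V2 * ?L) * (?Ep + (?Ex + ?Eb))"
        by (simp add: b0_def T_def add.assoc)
      also have "\<dots> = ?n * ?Ep + ?V2 * ?K + (?n * (?Ex + ?Eb) + (1 / ?n + ?Mx) * ?V2 * ?L * ?Ep)"
        by (simp add: algebra_simps)
      finally show ?thesis using Ep0 Ex0 c0 n1 by (simp add: add_increasing2)
    qed
    have U0: "0 \<le> ?U" by (simp add: sum_nonneg)
    have key2: "(2 * ?n + 1) / (4 * ?n) * (us i)\<^sup>2 \<le> ?U * (b0 coal vv l i * T i)"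
      using key mult_left_mono[OF b0T U0] by (simp add: distrib_left)
    have Pn: "?U / ?n ^ 3 \<le> (snorm (Pmat coal u i))\<^sup>2" by (rule snorm_P_lower[OF npos])
    have lhs0: "0 \<le> ?n * ?Ep + ?V2 * ?K" using n1
      by (intro add_nonneg_nonneg mult_nonneg_nonneg) (auto simp: sum_nonneg)
    have b0T0: "0 \<le> b0 coal vv l i * T i" using lhs0 b0T by linarith
    have "cw / 2 * (?nsum * ((?n + 1/2) * (Dl i)\<^sup>2)) = \<alpha>\<^sup>2 * ?nsum * cw * ((2 * ?n + 1) / (4 * ?n) * (us i)\<^sup>2) / ?n ^ 3"
      unfolding Dl_eq using n1 by (simp add: power2_eq_square power3_eq_cube field_simps)
    also have "\<dots> \<le> \<alpha>\<^sup>2 * ?nsum * cw * (?U * (b0 coal vv l i * T i)) / ?n ^ 3"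
      using key2 cw0 n1 by (intro divide_right_mono mult_left_mono) auto
    also have "\<dots> = \<alpha>\<^sup>2 * ?nsum * cw * (?U / ?n ^ 3) * (b0 coal vv l i * T i)" by simp
    also have "\<dots> \<le> \<alpha>\<^sup>2 * ?nsum * cw * (snorm (Pmat coal u i))\<^sup>2 * (b0 coal vv l i * T i)"
      using Pn cw0 b0T0 by (intro mult_right_mono mult_left_mono) auto
    also have "\<dots> = \<alpha>\<^sup>2 * b2 E W coal u vv l i * T i" by (simp add: b2_def cw_def)
    finally show ?thesis .
  qed
  have step6: "(\<Sum>i\<in>UNIV. \<alpha>\<^sup>2 * b2 E W coal u vv l i * T i) \<le> \<alpha>\<^sup>2 * (MAX i\<in>UNIV. b2 E W coal u vv l i) * (\<Sum>i\<in>UNIV. T i)"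
  proof -
    have "(\<Sum>i\<in>UNIV. \<alpha>\<^sup>2 * b2 E W coal u vv l i * T i) \<le> (\<Sum>i\<in>UNIV. \<alpha>\<^sup>2 * (MAX i\<in>UNIV. b2 E W coal u vv l i) * T i)"
      by (intro sum_mono mult_right_mono mult_left_mono T0) auto
    then show ?thesis by (simp add: sum_distrib_left)
  qed
  have sumT: "(\<Sum>i\<in>UNIV. T i) = (norm (e_psi coal vv (psi k)))\<^sup>2 + (norm e0)\<^sup>2 + real CARD('c) * (norm (e_xbar coal u ystar (x k)))\<^sup>2"
  proof -
    have inner: "(\<Sum>m\<in>UNIV. (e_psi coal vv (psi k) $ (j, m))\<^sup>2)
        = (\<Sum>m\<in>memb coal (coal j). (psi k j m - vv j * psibar coal (psi k) (coal j) m)\<^sup>2)" for j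
    proof -
      have "(\<Sum>m\<in>UNIV. (e_psi coal vv (psi k) $ (j, m))\<^sup>2)
          = (\<Sum>m\<in>UNIV. if m \<in> memb coal (coal j) then (psi k j m - vv j * psibar coal (psi k) (coal j) m)\<^sup>2 else 0)"
        by (rule sum.cong) (auto simp: e_psi_def memb_def)
      also have "\<dots> = (\<Sum>m\<in>memb coal (coal j). (psi k j m - vv j * psibar coal (psi k) (coal j) m)\<^sup>2)"
        using sum.inter_restrict[of UNIV "\<lambda>m. (psi k j m - vv j * psibar coal (psi k) (coal j) m)\<^sup>2" "memb coal (coal j)"]
        by simp
      finally show ?thesis .
    qed
    have P1: "(\<Sum>i\<in>UNIV. \<Sum>j\<in>memb coal i. \<Sum>m\<in>memb coal i. (psi k j m - vv j * ((\<Sum>j'\<in>memb coal i. psi k j' m) / real (ncard coal i)))\<^sup>2)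
        = (norm (e_psi coal vv (psi k)))\<^sup>2"
    proof -
      have "(norm (e_psi coal vv (psi k)))\<^sup>2 = (\<Sum>j\<in>UNIV. \<Sum>m\<in>memb coal (coal j). (psi k j m - vv j * psibar coal (psi k) (coal j) m)\<^sup>2)"
        by (simp add: norm_sq sum_UNIV_pair inner)
      also have "\<dots> = (\<Sum>i\<in>UNIV. \<Sum>j\<in>memb coal i. \<Sum>m\<in>memb coal (coal j). (psi k j m - vv j * psibar coal (psi k) (coal j) m)\<^sup>2)"
        by (rule sum_group_coal)
      also have "\<dots> = (\<Sum>i\<in>UNIV. \<Sum>j\<in>memb coal i. \<Sum>m\<in>memb coal i. (psi k j m - vv j * ((\<Sum>j'\<in>memb coal i. psi k j' m) / real (ncard coal i)))\<^sup>2)"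
        by (intro sum.cong refl) (auto simp: memb_def psibar_def)
      finally show ?thesis by simp
    qed
    have P2: "(\<Sum>i\<in>UNIV. \<Sum>j\<in>memb coal i. \<Sum>p\<in>UNIV. (e0 $ (j, p))\<^sup>2) = (norm e0)\<^sup>2"
    proof -
      have "(norm e0)\<^sup>2 = (\<Sum>j\<in>UNIV. \<Sum>p\<in>UNIV. (e0 $ (j, p))\<^sup>2)" by (simp add: norm_sq sum_UNIV_pair)
      also have "\<dots> = (\<Sum>i\<in>UNIV. \<Sum>j\<in>memb coal i. \<Sum>p\<in>UNIV. (e0 $ (j, p))\<^sup>2)" by (rule sum_group_coal)
      finally show ?thesis by simp
    qed
    show ?thesis unfolding T_def sum.distrib P1 P2 by simp
  qed
  have sum5: "cw / 2 * (?nsum * (\<Sum>i\<in>UNIV. (real (ncard coal i) + 1/2) * (Dl i)\<^sup>2)) \<le> (\<Sum>i\<in>UNIV. \<alpha>\<^sup>2 * b2 E W coal u vv l i * T i)"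
  proof -
    have "cw / 2 * (?nsum * (\<Sum>i\<in>UNIV. (real (ncard coal i) + 1/2) * (Dl i)\<^sup>2)) = (\<Sum>i\<in>UNIV. cw / 2 * (?nsum * ((real (ncard coal i) + 1/2) * (Dl i)\<^sup>2)))"
      by (simp add: sum_distrib_left)
    also have "\<dots> \<le> (\<Sum>i\<in>UNIV. \<alpha>\<^sup>2 * b2 E W coal u vv l i * T i)" by (intro sum_mono step5)
    finally show ?thesis .
  qed
  have "Vxi W (e_xi coal u (x (Suc k)) (xi (Suc k))) - Vxi W e0
      \<le> -(1/2) * (norm e0)\<^sup>2 + cw / 2 * (5/4 * ?nsum * (norm ex)\<^sup>2)
        + cw / 2 * (?nsum * (\<Sum>i\<in>UNIV. (real (ncard coal i) + 1/2) * (Dl i)\<^sup>2))"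
  proof -
    have "cw / 2 * (norm dvec)\<^sup>2 \<le> cw / 2 * (5/4 * ?nsum * (norm ex)\<^sup>2 + ?nsum * (\<Sum>i\<in>UNIV. (real (ncard coal i) + 1/2) * (Dl i)\<^sup>2))"
      using step3 cw0 by (intro mult_left_mono) auto
    then show ?thesis using step2 by (simp add: distrib_left)
  qed
  then show ?thesis using step4 sum5 step6 unfolding sumT e0_def ex_def by linarith
qed

end
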